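(* There is an absolute constant $K>0$ such that the following holds. Let $n\ge2$, let $A\in\mathbb{R}^{n\times n}$ be symmetric with zero diagonal, let $\lambda>0$ with $\lambda\ge\max_i\sum_j|A_{ij}|$, let $p_1,\dots,p_n\in[0,1)$ be known with $p_{\max}=\max_ip_i$, and let $\epsilon>0$, $\delta\in(0,1)$. Suppose $$T\ge\max\left\{16\log(2n-1),\ K\,\epsilon^{-4}(1-p_{\max})^{-4}\exp\Big(\big(\tfrac{2}{1-p_{\max}}+10\big)\lambda\Big)\log\frac n\delta\right\}$$ and run the missing-data SMG algorithm with $T$ iterations and step size $\eta=\frac{(1-p_{\max})^2}{2}\exp\big(-\frac{\lambda}{1-p_{\max}}\big)\sqrt{\frac{\log(2n-1)}{T}}$. Then with probability at least $1-\delta$ its output $\bar w$ satisfies $$\big|\bar w_i-\bar w_{n-1+i}-A_{ni}\big|\le\epsilon\quad\text{for all } i\in[n-1].$$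
   Context: Ising model $\mathcal{D}=\mathcal{D}(A,0)$ on $\{-1,1\}^n$: $\Pr[Z=z]\propto\exp\big(\sum_{i<j}A_{ij}z_iz_j\big)$. Missing-data distribution $\mathcal{D}_{\mathsf{miss}}$: draw $Z\sim\mathcal{D}$ and independent $C_1,\dots,C_n\in\{0,1\}$ with $\Pr[C_i=1]=1-p_i$; output $X$ with $X_i=C_iZ_i$. Estimator: for $w\in\mathbb{R}^{2n-1}$, $X\in\{-1,0,1\}^n$, $v_j=w_j-w_{n-1+j}$, and $i\in[n-1]$, $$g^i_{\mathsf{miss}}(w;X)=-\frac{X_n}{1-p_n}\cdot\frac{\exp(-v_iX_nX_i)X_i}{1-p_i}\cdot\prod_{j\in[n-1],\,j\ne i}\frac{\exp(-v_jX_nX_j)-p_j}{1-p_j},$$ $G_{\mathsf{miss}}(w;X)=\sum_{i=1}^{n-1}g^i_{\mathsf{miss}}(w;X)(e^i-e^{n-1+i})\in\mathbb{R}^{2n-1}$ ($e^i$ standard basis vectors). Missing-data SMG algorithm (for vertex $n$): set $w^1_i=\lambda/(2n-1)$ for $i\in[2n-1]$; for $t=1,\dots,T$, draw a fresh independent sample $X^t\sim\mathcal{D}_{\mathsf{miss}}$, let $G^t=G_{\mathsf{miss}}(w^t;X^t)$, $C^t=(w^t)^TG^t/\lambda$, and set $w^{t+1}_i=w^t_i(1-\eta G^t_i+\eta C^t)$ for all $i$; output $\bar w=\frac1T\sum_{t=1}^Tw^t$. *)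

theory Defs
  imports "HOL-Probability.Probability"
begin

text \<open>Vertices are 1..n. A configuration is a function nat => real that takes
values in {-1,1} on {1..n} and is 0 elsewhere.\<close>

definition ising_configs :: "nat \<Rightarrow> (nat \<Rightarrow> real) set" where
  "ising_configs n = {z. (\<forall>i\<in>{1..n}. z i = -1 \<or> z i = 1) \<and> (\<forall>i. i \<notin> {1..n} \<longrightarrow> z i = 0)}"

definition ising_energy :: "nat \<Rightarrow> (nat \<Rightarrow> nat \<Rightarrow> real) \<Rightarrow> (nat \<Rightarrow> real) \<Rightarrow> real" where
  "ising_energy n A z = (\<Sum>i\<in>{1..n}. \<Sum>j\<in>{i<..n}. A i j * z i * z j)"

definition ising_pmf :: "nat \<Rightarrow> (nat \<Rightarrow> nat \<Rightarrow> real) \<Rightarrow> (nat \<Rightarrow> real) pmf" where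
  "ising_pmf n A = embed_pmf (\<lambda>z. if z \<in> ising_configs n
       then exp (ising_energy n A z) / (\<Sum>y\<in>ising_configs n. exp (ising_energy n A y)) else 0)"

definition miss_pmf :: "nat \<Rightarrow> (nat \<Rightarrow> nat \<Rightarrow> real) \<Rightarrow> (nat \<Rightarrow> real) \<Rightarrow> (nat \<Rightarrow> real) pmf" where
  "miss_pmf n A p = do {
      z \<leftarrow> ising_pmf n A;
      c \<leftarrow> Pi_pmf {1..n} False (\<lambda>i. bernoulli_pmf (1 - p i));
      return_pmf (\<lambda>i. if c i then z i else 0) }"

definition g_miss :: "nat \<Rightarrow> (nat \<Rightarrow> real) \<Rightarrow> (nat \<Rightarrow> real) \<Rightarrow> (nat \<Rightarrow> real) \<Rightarrow> nat \<Rightarrow> real" where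
  "g_miss n p w X i =
     (let v = (\<lambda>j. w j - w (n - 1 + j)) in
       - (X n / (1 - p n)) * (exp (- v i * X n * X i) * X i / (1 - p i)) *
       (\<Prod>j\<in>{1..n-1} - {i}. (exp (- v j * X n * X j) - p j) / (1 - p j)))"

text \<open>G_miss(w;X) = sum_i g^i (e^i - e^{n-1+i}), a vector indexed by 1..2n-1.\<close>
definition G_miss :: "nat \<Rightarrow> (nat \<Rightarrow> real) \<Rightarrow> (nat \<Rightarrow> real) \<Rightarrow> (nat \<Rightarrow> real) \<Rightarrow> nat \<Rightarrow> real" where
  "G_miss n p w X k =
     (if 1 \<le> k \<and> k \<le> n - 1 then g_miss n p w X k
      else if n \<le> k \<and> k \<le> 2 * n - 2 then - g_miss n p w X (k - (n - 1))
      else 0)"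

definition smg_step :: "nat \<Rightarrow> (nat \<Rightarrow> real) \<Rightarrow> real \<Rightarrow> real \<Rightarrow> (nat \<Rightarrow> real) \<Rightarrow> (nat \<Rightarrow> real) \<Rightarrow> (nat \<Rightarrow> real)" where
  "smg_step n p lam eta w X =
     (let G = G_miss n p w X;
          C = (\<Sum>i\<in>{1..2*n-1}. w i * G i) / lam
      in (\<lambda>i. w i * (1 - eta * G i + eta * C)))"

text \<open>smg_iterate n p lam eta xs k = w^{k+1}, where sample X^t = xs t (t = 1..T).\<close>
fun smg_iterate :: "nat \<Rightarrow> (nat \<Rightarrow> real) \<Rightarrow> real \<Rightarrow> real \<Rightarrow> (nat \<Rightarrow> nat \<Rightarrow> real) \<Rightarrow> nat \<Rightarrow> (nat \<Rightarrow> real)" where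
  "smg_iterate n p lam eta xs 0 = (\<lambda>i. lam / real (2 * n - 1))"
| "smg_iterate n p lam eta xs (Suc k) = smg_step n p lam eta (smg_iterate n p lam eta xs k) (xs (Suc k))"

definition smg_output :: "nat \<Rightarrow> (nat \<Rightarrow> real) \<Rightarrow> real \<Rightarrow> real \<Rightarrow> nat \<Rightarrow> (nat \<Rightarrow> nat \<Rightarrow> real) \<Rightarrow> (nat \<Rightarrow> real)" where
  "smg_output n p lam eta T xs = (\<lambda>i. (\<Sum>k<T. smg_iterate n p lam eta xs k i) / real T)"

definition miss_samples :: "nat \<Rightarrow> (nat \<Rightarrow> nat \<Rightarrow> real) \<Rightarrow> (nat \<Rightarrow> real) \<Rightarrow> nat \<Rightarrow> (nat \<Rightarrow> nat \<Rightarrow> real) pmf" where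
  "miss_samples n A p T = Pi_pmf {1..T} (\<lambda>_. 0) (\<lambda>_. miss_pmf n A p)"

end

theory Submission
  imports Defs
begin


lemma mgf_step_bound:
  fixes M :: "'a pmf" and F :: "'a \<Rightarrow> real"
  assumes "s > 0" "c \<ge> 0" "\<And>y. y \<in> set_pmf M \<Longrightarrow> \<bar>F y\<bar> \<le> c"
    "measure_pmf.expectation M F = 0"
  shows "(\<integral>\<^sup>+y. ennreal (exp (s * F y)) \<partial>measure_pmf M) \<le> ennreal (exp (s\<^sup>2 * c\<^sup>2 / 2))"
proof -
  interpret interval_bounded_random_variable "measure_pmf M" F "-c" c
    by unfold_locales (auto simp: AE_measure_pmf_iff intro: assms(3)[THEN abs_le_D1] dest: assms(3) )
  have "(\<integral>\<^sup>+y. ennreal (exp (s * F y)) \<partial>measure_pmf M) \<le> ennreal (exp (s\<^sup>2 * (c - - c)\<^sup>2 / 8))"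
    by (rule Hoeffdings_lemma_nn_integral_0) (use assms in auto)
  also have "s\<^sup>2 * (c - - c)\<^sup>2 / 8 = s\<^sup>2 * c\<^sup>2 / 2" by (simp add: power2_eq_square algebra_simps)
  finally show ?thesis .
qed

locale azuma_setup =
  fixes M :: "'a pmf" and D :: "nat \<Rightarrow> (nat \<Rightarrow> 'a) \<Rightarrow> real" and T :: nat and c :: real and d :: 'a
  assumes c_nonneg: "c \<ge> 0"
  assumes dep: "\<And>k xs ys. k < T \<Longrightarrow> (\<And>j. j \<in> {1..Suc k} \<Longrightarrow> xs j = ys j) \<Longrightarrow> D k xs = D k ys"
  assumes bnd: "\<And>k xs. k < T \<Longrightarrow> (\<And>j. j \<in> {1..Suc k} \<Longrightarrow> xs j \<in> set_pmf M) \<Longrightarrow> \<bar>D k xs\<bar> \<le> c"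
  assumes mean: "\<And>k xs. k < T \<Longrightarrow> (\<And>j. j \<in> {1..k} \<Longrightarrow> xs j \<in> set_pmf M) \<Longrightarrow>
      measure_pmf.expectation M (\<lambda>y. D k (xs(Suc k := y))) = 0"
begin

lemma mgf:
  assumes "m \<le> T" "s > 0"
  shows "(\<integral>\<^sup>+xs. ennreal (exp (s * (\<Sum>k<m. D k xs))) \<partial>measure_pmf (Pi_pmf {1..m} d (\<lambda>_. M)))
          \<le> ennreal (exp (real m * (s\<^sup>2 * c\<^sup>2 / 2)))"
  using assms(1)
proof (induction m)
  case 0
  then show ?case by simp
next
  case (Suc m)
  have ins: "{1..Suc m} = insert (Suc m) {1..m}" by auto
  let ?P = "Pi_pmf {1..m} d (\<lambda>_. M)"
  have "(\<integral>\<^sup>+xs. ennreal (exp (s * (\<Sum>k<Suc m. D k xs))) \<partial>measure_pmf (Pi_pmf {1..Suc m} d (\<lambda>_. M)))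
     = (\<integral>\<^sup>+f. \<integral>\<^sup>+y. ennreal (exp (s * (\<Sum>k<Suc m. D k (f(Suc m := y))))) \<partial>measure_pmf M \<partial>measure_pmf ?P)"
    unfolding ins
    by (subst Pi_pmf_insert) (auto simp: nn_integral_pair_pmf' pair_commute_pmf[of M] case_prod_unfold)
  also have "\<dots> \<le> (\<integral>\<^sup>+f. ennreal (exp (s * (\<Sum>k<m. D k f))) * ennreal (exp (s\<^sup>2 * c\<^sup>2 / 2)) \<partial>measure_pmf ?P)"
  proof (rule nn_integral_mono_AE)
    show "AE f in measure_pmf ?P. (\<integral>\<^sup>+y. ennreal (exp (s * (\<Sum>k<Suc m. D k (f(Suc m := y))))) \<partial>measure_pmf M)
        \<le> ennreal (exp (s * (\<Sum>k<m. D k f))) * ennreal (exp (s\<^sup>2 * c\<^sup>2 / 2))"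
      unfolding AE_measure_pmf_iff
    proof
      fix f assume f: "f \<in> set_pmf ?P"
      have fM: "\<And>j. j \<in> {1..m} \<Longrightarrow> f j \<in> set_pmf M"
        using f by (auto simp: set_Pi_pmf PiE_dflt_def)
      have eq: "(\<Sum>k<Suc m. D k (f(Suc m := y))) = (\<Sum>k<m. D k f) + D m (f(Suc m := y))" for y
      proof -
        have "D k (f(Suc m := y)) = D k f" if "k < m" for k
          by (rule dep) (use that Suc.prems in auto)
        then show ?thesis by simp
      qed
      have "(\<integral>\<^sup>+y. ennreal (exp (s * (\<Sum>k<Suc m. D k (f(Suc m := y))))) \<partial>measure_pmf M)
          = (\<integral>\<^sup>+y. ennreal (exp (s * (\<Sum>k<m. D k f))) * ennreal (exp (s * D m (f(Suc m := y)))) \<partial>measure_pmf M)"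
        unfolding eq by (simp add: distrib_left exp_add ennreal_mult)
      also have "\<dots> = ennreal (exp (s * (\<Sum>k<m. D k f))) * (\<integral>\<^sup>+y. ennreal (exp (s * D m (f(Suc m := y)))) \<partial>measure_pmf M)"
        by (rule nn_integral_cmult) auto
      also have "\<dots> \<le> ennreal (exp (s * (\<Sum>k<m. D k f))) * ennreal (exp (s\<^sup>2 * c\<^sup>2 / 2))"
      proof (rule mult_left_mono)
        show "(\<integral>\<^sup>+y. ennreal (exp (s * D m (f(Suc m := y)))) \<partial>measure_pmf M) \<le> ennreal (exp (s\<^sup>2 * c\<^sup>2 / 2))"
        proof (rule mgf_step_bound)
          show "\<bar>D m (f(Suc m := y))\<bar> \<le> c" if "y \<in> set_pmf M" for y
            by (rule bnd) (use Suc.prems that fM in auto)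
          show "measure_pmf.expectation M (\<lambda>y. D m (f(Suc m := y))) = 0"
            by (rule mean) (use Suc.prems fM in auto)
        qed (use assms c_nonneg in auto)
      qed auto
      finally show "(\<integral>\<^sup>+y. ennreal (exp (s * (\<Sum>k<Suc m. D k (f(Suc m := y))))) \<partial>measure_pmf M)
        \<le> ennreal (exp (s * (\<Sum>k<m. D k f))) * ennreal (exp (s\<^sup>2 * c\<^sup>2 / 2))" .
    qed
  qed
  also have "\<dots> = (\<integral>\<^sup>+f. ennreal (exp (s * (\<Sum>k<m. D k f))) \<partial>measure_pmf ?P) * ennreal (exp (s\<^sup>2 * c\<^sup>2 / 2))"
    by (rule nn_integral_multc) auto
  also have "\<dots> \<le> ennreal (exp (real m * (s\<^sup>2 * c\<^sup>2 / 2))) * ennreal (exp (s\<^sup>2 * c\<^sup>2 / 2))"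
    by (rule mult_right_mono) (use Suc in auto)
  also have "\<dots> = ennreal (exp (real (Suc m) * (s\<^sup>2 * c\<^sup>2 / 2)))"
    by (simp add: ennreal_mult[symmetric] exp_add[symmetric] algebra_simps)
  finally show ?case .
qed

lemma azuma:
  assumes "a > 0" "c > 0" "T > 0"
  shows "measure_pmf.prob (Pi_pmf {1..T} d (\<lambda>_. M)) {xs. a \<le> (\<Sum>k<T. D k xs)} \<le> exp (- (a\<^sup>2) / (2 * real T * c\<^sup>2))"
proof -
  define s where "s = a / (real T * c\<^sup>2)"
  have s: "s > 0" using assms by (simp add: s_def)
  let ?P = "Pi_pmf {1..T} d (\<lambda>_. M)"
  let ?S = "\<lambda>xs. (\<Sum>k<T. D k xs)"
  have "emeasure (measure_pmf ?P) {xs. a \<le> ?S xs} = (\<integral>\<^sup>+xs. indicator {xs. a \<le> ?S xs} xs \<partial>measure_pmf ?P)"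
    by simp
  also have "\<dots> \<le> (\<integral>\<^sup>+xs. ennreal (exp (- s * a)) * ennreal (exp (s * ?S xs)) \<partial>measure_pmf ?P)"
  proof (rule nn_integral_mono)
    fix xs
    show "indicator {xs. a \<le> ?S xs} xs \<le> ennreal (exp (- s * a)) * ennreal (exp (s * ?S xs))"
    proof (cases "a \<le> ?S xs")
      case True
      have "1 \<le> exp (- s * a + s * ?S xs)" using True s by (simp add: algebra_simps mult_left_mono)
      then show ?thesis using True by (simp add: ennreal_mult[symmetric] exp_add[symmetric])
    qed simp
  qed
  also have "\<dots> = ennreal (exp (- s * a)) * (\<integral>\<^sup>+xs. ennreal (exp (s * ?S xs)) \<partial>measure_pmf ?P)"
    by (rule nn_integral_cmult) auto
  also have "\<dots> \<le> ennreal (exp (- s * a)) * ennreal (exp (real T * (s\<^sup>2 * c\<^sup>2 / 2)))"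
    by (rule mult_left_mono) (use mgf[OF _ s, of T] in auto)
  also have "\<dots> = ennreal (exp (- (a\<^sup>2) / (2 * real T * c\<^sup>2)))"
  proof -
    have "- s * a + real T * (s\<^sup>2 * c\<^sup>2 / 2) = - (a\<^sup>2) / (2 * real T * c\<^sup>2)"
      using assms by (simp add: s_def power2_eq_square field_simps)
    then show ?thesis by (simp add: ennreal_mult[symmetric] exp_add[symmetric])
  qed
  finally show ?thesis
    by (simp add: measure_pmf.emeasure_eq_measure)
qed

end


lemma ln_lower2:
  fixes x :: real assumes "\<bar>x\<bar> \<le> 1/2"
  shows "- x - 2 * x\<^sup>2 \<le> ln (1 - x)"
proof (cases "x \<ge> 0")
  case True then show ?thesis using ln_one_minus_pos_lower_bound[of x] assms by auto
next
  case False
  have "(-x) - (-x)\<^sup>2 \<le> ln (1 + (-x))" using ln_one_plus_pos_lower_bound[of "-x"] assms False by auto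
  then have h: "- x - x\<^sup>2 \<le> ln (1 - x)" by simp
  have "x\<^sup>2 \<ge> 0" by simp
  with h show ?thesis by linarith
qed

lemma exp_quad_pos:
  fixes y :: real assumes "y \<ge> 0"
  shows "1 + y + y\<^sup>2 / 2 \<le> exp y"
proof -
  have "(\<lambda>t. exp t - 1 - t - t\<^sup>2/2) 0 \<le> (\<lambda>t. exp t - 1 - t - t\<^sup>2/2) y"
  proof (rule DERIV_nonneg_imp_nondecreasing[OF assms])
    fix t :: real assume t: "0 \<le> t" "t \<le> y"
    show "\<exists>d. ((\<lambda>t. exp t - 1 - t - t\<^sup>2/2) has_real_derivative d) (at t) \<and> d \<ge> 0"
    proof (intro exI conjI)
      show "((\<lambda>t. exp t - 1 - t - t\<^sup>2/2) has_real_derivative (exp t - 1 - t)) (at t)"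
        by (auto intro!: derivative_eq_intros)
      have "1 + t \<le> exp t" by (rule exp_ge_add_one_self)
      then show "exp t - 1 - t \<ge> 0" by linarith
    qed
  qed
  then show ?thesis by simp
qed

lemma exp_quad_neg_aux:
  fixes x :: real assumes "x \<ge> 0"
  shows "2 - x\<^sup>2 \<le> 2 * (1 + x) * exp (- x)"
proof -
  have "(\<lambda>t. 2 * (1 + t) * exp (- t) - 2 + t\<^sup>2) 0 \<le> (\<lambda>t. 2 * (1 + t) * exp (- t) - 2 + t\<^sup>2) x"
  proof (rule DERIV_nonneg_imp_nondecreasing[OF assms])
    fix t :: real assume t: "0 \<le> t" "t \<le> x"
    have "exp (-t) \<le> 1" using t by simp
    then have "0 \<le> 2 * t * (1 - exp (-t))" using t by simp
    then show "\<exists>d. ((\<lambda>t. 2 * (1 + t) * exp (- t) - 2 + t\<^sup>2) has_real_derivative d) (at t) \<and> d \<ge> 0"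
      by (intro exI[of _ "2 * t * (1 - exp (-t))"] conjI)
         (auto intro!: derivative_eq_intros simp: algebra_simps)
  qed
  then show ?thesis by simp
qed

lemma exp_quad_lower:
  fixes x :: real
  shows "x\<^sup>2 / (2 * (1 + \<bar>x\<bar>)) \<le> exp (- x) - 1 + x"
proof (cases "x \<ge> 0")
  case True
  have "x\<^sup>2 / (2 * (1 + x)) = (2 - x\<^sup>2) / (2 * (1 + x)) - 1 + x"
    using True by (simp add: field_simps power2_eq_square)
  also have "(2 - x\<^sup>2) / (2 * (1 + x)) \<le> exp (- x)"
    using exp_quad_neg_aux[OF True] True by (simp add: divide_le_eq mult.commute)
  finally show ?thesis using True by simp
next
  case False
  have "1 + (-x) + (-x)\<^sup>2 / 2 \<le> exp (-x)" using exp_quad_pos[of "-x"] False by simp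
  then have a: "x\<^sup>2 / 2 \<le> exp (-x) - 1 + x" by simp
  have b: "x\<^sup>2 / (2 * (1 + \<bar>x\<bar>)) \<le> x\<^sup>2 / 2"
    by (rule divide_left_mono) auto
  from a b show ?thesis by linarith
qed

lemma factor_bound:
  fixes p q u y :: real
  assumes p: "0 \<le> p" "p < 1" and q: "0 < q" "q \<le> 1 - p" and u: "\<bar>u\<bar> \<le> y"
  shows "\<bar>(exp u - p) / (1 - p)\<bar> \<le> exp (y / q)"
proof -
  have y0: "y \<ge> 0" using u by linarith
  have yq: "y / (1 - p) \<le> y / q" using q y0 by (intro divide_left_mono) auto
  have e1: "1 \<le> exp (y / q)" using y0 q by simp
  have lin: "y / q \<le> exp (y / q)" using exp_ge_add_one_self[of "y/q"] by linarith
  show ?thesis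
  proof (cases "u \<ge> 0")
    case True
    have conv: "exp ((1 - p) * (y / (1 - p)) + p * 0) \<le> (1 - p) * exp (y / (1 - p)) + p * exp 0"
      using convex_onD[OF exp_convex, of p "y/(1-p)" 0] p by simp
    have "exp u \<le> exp y" using u by simp
    also have "exp y \<le> (1 - p) * exp (y / (1 - p)) + p" using conv p by simp
    finally have "(exp u - p) / (1 - p) \<le> exp (y / (1 - p))" using p by (simp add: divide_le_eq mult.commute)
    also have "\<dots> \<le> exp (y / q)" using yq by simp
    finally have up: "(exp u - p) / (1 - p) \<le> exp (y / q)" .
    have "exp u \<ge> 1" using True by simp
    then have "(exp u - p) / (1 - p) \<ge> 0" using p by (intro divide_nonneg_pos) linarith+
    then show ?thesis using up by (metis abs_of_nonneg)
  next
    case False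
    have eu: "exp u \<le> 1" using False by simp
    have l1: "1 + u \<le> exp u" by simp
    show ?thesis
    proof (cases "exp u \<ge> p")
      case True
      then have "\<bar>(exp u - p) / (1 - p)\<bar> = (exp u - p) / (1 - p)" using p by simp
      also have "\<dots> \<le> 1" using eu p by (simp add: divide_le_eq)
      finally show ?thesis using e1 by linarith
    next
      case False
      then have "\<bar>(exp u - p) / (1 - p)\<bar> = (p - exp u) / (1 - p)" using p by (simp add: abs_div)
      also have "\<dots> \<le> y / (1 - p)"
      proof (rule divide_right_mono)
        show "p - exp u \<le> y" using l1 u p by linarith
      qed (use p in auto)
      finally show ?thesis using yq lin by linarith
    qed
  qed
qed

lemma lam_poly_bound:
  fixes l :: real assumes "l \<ge> 0"
  shows "l * (1 + 2 * l) \<le> 2 * exp (2 * l)"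
proof -
  have "(1 + l)\<^sup>2 \<le> (exp l)\<^sup>2" using exp_ge_add_one_self[of l] assms by (intro power_mono) auto
  also have "(exp l)\<^sup>2 = exp (2 * l)" by (simp add: power2_eq_square exp_add[symmetric])
  finally have "(1+l)\<^sup>2 \<le> exp (2*l)" .
  moreover have "l * (1 + 2 * l) \<le> 2 * (1 + l)\<^sup>2" using assms by (simp add: power2_eq_square algebra_simps)
  ultimately show ?thesis by linarith
qed


abbreviation IE where "IE n A z \<equiv> ising_energy n A z"

definition Zp :: "nat \<Rightarrow> (nat \<Rightarrow> nat \<Rightarrow> real) \<Rightarrow> real" where
  "Zp n A = (\<Sum>y\<in>ising_configs n. exp (ising_energy n A y))"

lemma configs_PiE: "ising_configs n = PiE_dflt {1..n} 0 (\<lambda>_. {-1,1})"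
  by (auto simp: ising_configs_def PiE_dflt_def)

lemma finite_configs [simp]: "finite (ising_configs n)"
  unfolding configs_PiE by (intro finite_PiE_dflt) auto

lemma config_in: "(\<lambda>i. if i \<in> {1..n} then 1 else 0) \<in> ising_configs n"
  by (auto simp: ising_configs_def)

lemma configs_nonempty [simp]: "ising_configs n \<noteq> {}"
  using config_in by blast

lemma Zp_pos: "Zp n A > 0"
  unfolding Zp_def by (intro sum_pos) auto

lemma pmf_ising: "pmf (ising_pmf n A) z = (if z \<in> ising_configs n then exp (IE n A z) / Zp n A else 0)"
proof -
  let ?f = "\<lambda>z. if z \<in> ising_configs n then exp (IE n A z) / Zp n A else 0"
  have "(\<integral>\<^sup>+x. ennreal (?f x) \<partial>count_space UNIV) = (\<integral>\<^sup>+x. ennreal (exp (IE n A x) / Zp n A) * indicator (ising_configs n) x \<partial>count_space UNIV)"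
    by (intro nn_integral_cong) (auto simp: indicator_def)
  also have "\<dots> = (\<integral>\<^sup>+x. ennreal (exp (IE n A x) / Zp n A) \<partial>count_space (ising_configs n))"
    by (simp add: nn_integral_count_space_indicator)
  also have "\<dots> = (\<Sum>x\<in>ising_configs n. ennreal (exp (IE n A x) / Zp n A))"
    using Zp_pos[of n A] by (simp add: nn_integral_count_space_finite less_imp_le)
  also have "\<dots> = ennreal (\<Sum>x\<in>ising_configs n. exp (IE n A x) / Zp n A)"
    using Zp_pos[of n A] by (intro sum_ennreal) (simp add: less_imp_le)
  also have "(\<Sum>x\<in>ising_configs n. exp (IE n A x) / Zp n A) = 1"
    using Zp_pos[of n A] by (simp add: sum_divide_distrib[symmetric] Zp_def)
  finally have one: "(\<integral>\<^sup>+x. ennreal (?f x) \<partial>count_space UNIV) = 1" by simp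
  have nn: "\<And>x. 0 \<le> ?f x" using Zp_pos[of n A] by (simp add: less_imp_le)
  show ?thesis
    unfolding ising_pmf_def Zp_def[symmetric] by (rule pmf_embed_pmf[OF nn one])
qed

lemma set_pmf_ising: "set_pmf (ising_pmf n A) \<subseteq> ising_configs n"
  by (auto simp: set_pmf_eq pmf_ising split: if_splits)

lemma sum_pmf_ising: "(\<Sum>z\<in>ising_configs n. pmf (ising_pmf n A) z) = 1"
  using Zp_pos[of n A] by (simp add: pmf_ising sum_divide_distrib[symmetric] Zp_def)

lemma expectation_ising:
  "measure_pmf.expectation (ising_pmf n A) f = (\<Sum>z\<in>ising_configs n. pmf (ising_pmf n A) z * f z)"
  by (subst integral_measure_pmf_real[where A = "ising_configs n"]) (use set_pmf_ising in \<open>auto simp: mult.commute\<close>)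

definition flip :: "nat \<Rightarrow> (nat \<Rightarrow> real) \<Rightarrow> (nat \<Rightarrow> real)" where
  "flip k z = z(k := - z k)"

lemma flip_flip [simp]: "flip k (flip k z) = z"
  by (auto simp: flip_def)

lemma flip_config: "k \<in> {1..n} \<Longrightarrow> z \<in> ising_configs n \<Longrightarrow> flip k z \<in> ising_configs n"
  by (auto simp: ising_configs_def flip_def)

lemma bij_flip: "k \<in> {1..n} \<Longrightarrow> bij_betw (flip k) (ising_configs n) (ising_configs n)"
  by (rule bij_betwI[where g = "flip k"]) (auto intro: flip_config)

lemma sum_flip: "k \<in> {1..n} \<Longrightarrow> (\<Sum>z\<in>ising_configs n. f (flip k z)) = (\<Sum>z\<in>ising_configs n. f z)"
  by (rule sum.reindex_bij_betw[OF bij_flip])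

lemma config_val: "z \<in> ising_configs n \<Longrightarrow> i \<in> {1..n} \<Longrightarrow> z i = -1 \<or> z i = 1"
  unfolding ising_configs_def by blast

lemma config_sq: "z \<in> ising_configs n \<Longrightarrow> i \<in> {1..n} \<Longrightarrow> z i * z i = 1"
  using config_val[of z n i] by auto

lemma config_abs:
  assumes "z \<in> ising_configs n" shows "\<bar>z i\<bar> \<le> 1"
proof (cases "i \<in> {1..n}")
  case True then show ?thesis using config_val[OF assms True] by auto
next
  case False then show ?thesis using assms by (auto simp: ising_configs_def)
qed

lemma sum_lin_upd:
  fixes c z :: "nat \<Rightarrow> real"
  assumes "finite J" "i \<in> J"
  shows "(\<Sum>j\<in>J. c j * (z(i := v)) j) = (\<Sum>j\<in>J. c j * z j) + c i * (v - z i)"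
proof -
  have "(\<Sum>j\<in>J. c j * (z(i := v)) j) = c i * v + (\<Sum>j\<in>J - {i}. c j * (z(i := v)) j)"
    using assms by (subst sum.remove[of _ i]) auto
  also have "(\<Sum>j\<in>J - {i}. c j * (z(i := v)) j) = (\<Sum>j\<in>J - {i}. c j * z j)"
    by (intro sum.cong) auto
  also have "c i * v + \<dots> = (\<Sum>j\<in>J. c j * z j) + c i * (v - z i)"
  proof -
    have "c i * (v - z i) = c i * v - c i * z i" by (simp add: right_diff_distrib)
    moreover have "(\<Sum>j\<in>J. c j * z j) = c i * z i + (\<Sum>j\<in>J - {i}. c j * z j)"
      using assms by (subst sum.remove[of _ i]) auto
    ultimately show ?thesis by linarith
  qed
  finally show ?thesis .
qed

lemma energy_flip:
  assumes k: "k \<in> {1..n}" and sym: "\<forall>i\<in>{1..n}. \<forall>j\<in>{1..n}. A i j = A j i"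
  shows "IE n A z - IE n A (flip k z) = 2 * z k * (\<Sum>j\<in>{1..n} - {k}. A k j * z j)"
proof -
  let ?y = "flip k z"
  have inner: "(\<Sum>j\<in>{i<..n}. A i j * z i * z j) - (\<Sum>j\<in>{i<..n}. A i j * ?y i * ?y j)
      = (if i = k then 2 * z k * (\<Sum>j\<in>{k<..n}. A k j * z j) else if i < k then 2 * A i k * z i * z k else 0)"
    for i
  proof -
    have "(\<Sum>j\<in>{i<..n}. A i j * z i * z j) - (\<Sum>j\<in>{i<..n}. A i j * ?y i * ?y j)
        = (\<Sum>j\<in>{i<..n}. A i j * z i * z j - A i j * ?y i * ?y j)"
      by (simp add: sum_subtractf)
    also have "\<dots> = (if i = k then 2 * z k * (\<Sum>j\<in>{k<..n}. A k j * z j) else if i < k then 2 * A i k * z i * z k else 0)"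
    proof (cases "i = k")
      case True
      then show ?thesis by (simp add: flip_def sum_distrib_left algebra_simps)
    next
      case False
      have "(\<Sum>j\<in>{i<..n}. A i j * z i * z j - A i j * ?y i * ?y j) = (\<Sum>j\<in>{i<..n}. if k = j then 2 * A i k * z i * z k else 0)"
        using False by (intro sum.cong) (auto simp: flip_def)
      also have "\<dots> = (if i < k then 2 * A i k * z i * z k else 0)"
        using k False by (subst sum.delta') auto
      finally show ?thesis using False by simp
    qed
    finally show ?thesis .
  qed
  have "IE n A z - IE n A ?y = (\<Sum>i\<in>{1..n}. (\<Sum>j\<in>{i<..n}. A i j * z i * z j) - (\<Sum>j\<in>{i<..n}. A i j * ?y i * ?y j))"
    unfolding ising_energy_def by (simp add: sum_subtractf)
  also have "\<dots> = (\<Sum>i\<in>{1..n}. (if i = k then 2 * z k * (\<Sum>j\<in>{k<..n}. A k j * z j) else if i < k then 2 * A i k * z i * z k else 0))"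
    by (intro sum.cong) (use inner in auto)
  also have "\<dots> = 2 * z k * (\<Sum>j\<in>{k<..n}. A k j * z j) + (\<Sum>i\<in>{1..n} - {k}. (if i < k then 2 * A i k * z i * z k else 0))"
    using k by (subst sum.remove[of _ k]) (auto intro!: sum.cong)
  also have "(\<Sum>i\<in>{1..n} - {k}. (if i < k then 2 * A i k * z i * z k else 0)) = (\<Sum>i\<in>{1..<k}. 2 * A i k * z i * z k)"
  proof -
    have "(\<Sum>i\<in>{1..n} - {k}. (if i < k then 2 * A i k * z i * z k else 0)) = (\<Sum>i\<in>{i\<in>{1..n} - {k}. i < k}. 2 * A i k * z i * z k)"
      by (rule sum.inter_filter[symmetric]) simp
    also have "{i\<in>{1..n} - {k}. i < k} = {1..<k}" using k by auto
    finally show ?thesis .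
  qed
  also have "(\<Sum>i\<in>{1..<k}. 2 * A i k * z i * z k) = 2 * z k * (\<Sum>j\<in>{1..<k}. A k j * z j)"
    using sym k by (simp add: sum_distrib_left algebra_simps)
  also have "2 * z k * (\<Sum>j\<in>{k<..n}. A k j * z j) + 2 * z k * (\<Sum>j\<in>{1..<k}. A k j * z j)
       = 2 * z k * (\<Sum>j\<in>{1..n} - {k}. A k j * z j)"
  proof -
    have "{1..n} - {k} = {1..<k} \<union> {k<..n}" using k by auto
    then have "(\<Sum>j\<in>{1..n} - {k}. A k j * z j) = (\<Sum>j\<in>{1..<k} \<union> {k<..n}. A k j * z j)"
      by simp
    also have "\<dots> = (\<Sum>j\<in>{1..<k}. A k j * z j) + (\<Sum>j\<in>{k<..n}. A k j * z j)"
      by (rule sum.union_disjoint) auto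
    finally have "(\<Sum>j\<in>{1..n} - {k}. A k j * z j) = (\<Sum>j\<in>{1..<k}. A k j * z j) + (\<Sum>j\<in>{k<..n}. A k j * z j)" .
    then show ?thesis by (simp add: algebra_simps)
  qed
  finally show ?thesis .
qed


definition hh :: "nat \<Rightarrow> (nat \<Rightarrow> real) \<Rightarrow> (nat \<Rightarrow> real) \<Rightarrow> real" where
  "hh n \<theta> z = (\<Sum>j\<in>{1..n-1}. \<theta> j * z j)"

definition Sf :: "nat \<Rightarrow> (nat \<Rightarrow> nat \<Rightarrow> real) \<Rightarrow> (nat \<Rightarrow> real) \<Rightarrow> real" where
  "Sf n A \<theta> = (\<Sum>z\<in>ising_configs n. pmf (ising_pmf n A) z * exp (- z n * hh n \<theta> z))"

definition mgr :: "nat \<Rightarrow> (nat \<Rightarrow> nat \<Rightarrow> real) \<Rightarrow> (nat \<Rightarrow> real) \<Rightarrow> nat \<Rightarrow> real" where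
  "mgr n A \<theta> i = (\<Sum>z\<in>ising_configs n. pmf (ising_pmf n A) z * (- z n * z i * exp (- z n * hh n \<theta> z)))"

lemma sum_antisym_zero:
  fixes G :: "(nat \<Rightarrow> real) \<Rightarrow> real"
  assumes k: "k \<in> {1..n}" and anti: "\<And>z. z \<in> ising_configs n \<Longrightarrow> G (flip k z) = - G z"
  shows "(\<Sum>z\<in>ising_configs n. G z) = 0"
proof -
  have "(\<Sum>z\<in>ising_configs n. G z) = (\<Sum>z\<in>ising_configs n. G (flip k z))"
    by (rule sum_flip[OF k, symmetric])
  also have "\<dots> = - (\<Sum>z\<in>ising_configs n. G z)"
    by (simp add: anti sum_negf)
  finally show ?thesis by simp
qed

lemma hh_flip_other: "k \<notin> {1..n-1} \<Longrightarrow> hh n \<theta> (flip k z) = hh n \<theta> z"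
  unfolding hh_def flip_def by (intro sum.cong) auto

lemma hh_flip_in: "k \<in> {1..n-1} \<Longrightarrow> hh n \<theta> (flip k z) = hh n \<theta> z - 2 * \<theta> k * z k"
  unfolding hh_def flip_def by (subst sum_lin_upd) auto

lemma energy_flip_n:
  assumes n: "n \<ge> 2" and sym: "\<forall>i\<in>{1..n}. \<forall>j\<in>{1..n}. A i j = A j i"
  shows "IE n A (flip n z) = IE n A z - 2 * z n * hh n (\<lambda>j. A n j) z"
proof -
  have "{1..n} - {n} = {1..n-1}" using n by auto
  then show ?thesis using energy_flip[of n n A z] n sym by (simp add: hh_def)
qed

lemma grad_zero:
  assumes n: "n \<ge> 2" and sym: "\<forall>i\<in>{1..n}. \<forall>j\<in>{1..n}. A i j = A j i" and i: "i \<in> {1..n-1}"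
  shows "mgr n A (\<lambda>j. A n j) i = 0"
proof -
  let ?h = "hh n (\<lambda>j. A n j)"
  let ?G = "\<lambda>z. pmf (ising_pmf n A) z * (- z n * z i * exp (- z n * ?h z))"
  have nn: "n \<in> {1..n}" using n by auto
  have "(\<Sum>z\<in>ising_configs n. ?G z) = 0"
  proof (rule sum_antisym_zero[OF nn])
    fix z assume z: "z \<in> ising_configs n"
    have fz: "flip n z \<in> ising_configs n" by (rule flip_config[OF nn z])
    have hf: "?h (flip n z) = ?h z" by (rule hh_flip_other) auto
    have fn: "flip n z n = - z n" and fi: "flip n z i = z i" using i n by (auto simp: flip_def)
    have "?G (flip n z) = exp (IE n A z - 2 * z n * ?h z) / Zp n A * (z n * z i * exp (z n * ?h z))"
      using fz z by (simp add: pmf_ising energy_flip_n[OF n sym] hf fn fi)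
    also have "exp (IE n A z - 2 * z n * ?h z) * exp (z n * ?h z) = exp (IE n A z) * exp (- z n * ?h z)"
      by (simp add: exp_add[symmetric])
    then have "exp (IE n A z - 2 * z n * ?h z) / Zp n A * (z n * z i * exp (z n * ?h z))
        = exp (IE n A z) / Zp n A * (z n * z i * exp (- z n * ?h z))"
      by (simp add: field_simps)
    finally show "?G (flip n z) = - ?G z" using z by (simp add: pmf_ising)
  qed
  then show ?thesis unfolding mgr_def .
qed

lemma pairing:
  fixes \<nu> g :: "(nat \<Rightarrow> real) \<Rightarrow> real"
  assumes k: "k \<in> {1..n}" and r: "0 \<le> r" "r \<le> 1" and D: "D \<ge> 0"
    and nu0: "\<And>z. z \<in> ising_configs n \<Longrightarrow> \<nu> z \<ge> 0"
    and ratio: "\<And>z. z \<in> ising_configs n \<Longrightarrow> \<nu> (flip k z) \<ge> r * \<nu> z"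
    and gap: "\<And>z. z \<in> ising_configs n \<Longrightarrow> (g z)\<^sup>2 + (g (flip k z))\<^sup>2 \<ge> 2 * D"
  shows "r * D * (\<Sum>z\<in>ising_configs n. \<nu> z) \<le> (\<Sum>z\<in>ising_configs n. \<nu> z * (g z)\<^sup>2)"
proof -
  let ?C = "ising_configs n"
  have "2 * (\<Sum>z\<in>?C. \<nu> z * (g z)\<^sup>2) = (\<Sum>z\<in>?C. \<nu> z * (g z)\<^sup>2) + (\<Sum>z\<in>?C. \<nu> (flip k z) * (g (flip k z))\<^sup>2)"
    using sum_flip[OF k, of "\<lambda>z. \<nu> z * (g z)\<^sup>2"] by simp
  also have "\<dots> = (\<Sum>z\<in>?C. \<nu> z * (g z)\<^sup>2 + \<nu> (flip k z) * (g (flip k z))\<^sup>2)"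
    by (simp add: sum.distrib)
  also have "\<dots> \<ge> (\<Sum>z\<in>?C. 2 * (r * D) * \<nu> z)"
  proof (rule sum_mono)
    fix z assume z: "z \<in> ?C"
    have a: "r * \<nu> z * (g z)\<^sup>2 \<le> \<nu> z * (g z)\<^sup>2"
      using r nu0[OF z] mult_left_le_one_le[of "\<nu> z" r] by (intro mult_right_mono) auto
    have b: "r * \<nu> z * (g (flip k z))\<^sup>2 \<le> \<nu> (flip k z) * (g (flip k z))\<^sup>2"
      using ratio[OF z] by (intro mult_right_mono) auto
    have c: "r * \<nu> z * (2 * D) \<le> r * \<nu> z * ((g z)\<^sup>2 + (g (flip k z))\<^sup>2)"
      using gap[OF z] r nu0[OF z] by (intro mult_left_mono) auto
    show "2 * (r * D) * \<nu> z \<le> \<nu> z * (g z)\<^sup>2 + \<nu> (flip k z) * (g (flip k z))\<^sup>2"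
      using a b c by (simp add: algebra_simps)
  qed
  finally have "(\<Sum>z\<in>?C. 2 * (r * D) * \<nu> z) \<le> 2 * (\<Sum>z\<in>?C. \<nu> z * (g z)\<^sup>2)" .
  moreover have "(\<Sum>z\<in>?C. 2 * (r * D) * \<nu> z) = 2 * (r * D * (\<Sum>z\<in>?C. \<nu> z))"
    by (simp add: sum_distrib_left algebra_simps)
  ultimately show ?thesis by linarith
qed

lemma hh_add: "hh n (\<lambda>j. a j + b j) z = hh n a z + hh n b z"
  unfolding hh_def by (simp add: sum.distrib algebra_simps)

lemma hh_abs:
  assumes "z \<in> ising_configs n"
  shows "\<bar>hh n a z\<bar> \<le> (\<Sum>j\<in>{1..n-1}. \<bar>a j\<bar>)"
proof -
  have "\<bar>hh n a z\<bar> \<le> (\<Sum>j\<in>{1..n-1}. \<bar>a j * z j\<bar>)" unfolding hh_def by (rule sum_abs)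
  also have "\<dots> \<le> (\<Sum>j\<in>{1..n-1}. \<bar>a j\<bar>)"
    by (intro sum_mono) (use config_abs[OF assms] in \<open>auto simp: abs_mult intro: mult_left_le\<close>)
  finally show ?thesis .
qed

lemma strong_conv:
  assumes n: "n \<ge> 2" and sym: "\<forall>i\<in>{1..n}. \<forall>j\<in>{1..n}. A i j = A j i"
    and lam: "lam > 0" and rows: "\<forall>i\<in>{1..n}. (\<Sum>j\<in>{1..n}. \<bar>A i j\<bar>) \<le> lam"
    and i: "i \<in> {1..n-1}" and th: "(\<Sum>j\<in>{1..n-1}. \<bar>\<theta> j\<bar>) \<le> lam"
  shows "exp (- 3 * lam) / (2 * (1 + 2 * lam)) * (\<theta> i - A n i)\<^sup>2 \<le> Sf n A \<theta> - Sf n A (\<lambda>j. A n j)"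
proof -
  let ?C = "ising_configs n"
  let ?mu = "\<lambda>z. pmf (ising_pmf n A) z"
  define An where "An = (\<lambda>j. A n j)"
  define \<Delta> where "\<Delta> = (\<lambda>j. \<theta> j - A n j)"
  define a where "a = (\<lambda>z. z n * hh n An z)"
  define x where "x = (\<lambda>z. z n * hh n \<Delta> z)"
  define \<nu> where "\<nu> = (\<lambda>z. ?mu z * exp (- a z))"
  have nin: "n \<in> {1..n}" using n by auto
  have iin: "i \<in> {1..n}" "i \<noteq> n" using i n by auto
  have sub: "{1..n-1} \<subseteq> {1..n}" by auto
  have An_sum: "(\<Sum>j\<in>{1..n-1}. \<bar>An j\<bar>) \<le> lam"
  proof -
    have "(\<Sum>j\<in>{1..n-1}. \<bar>An j\<bar>) \<le> (\<Sum>j\<in>{1..n}. \<bar>A n j\<bar>)"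
      unfolding An_def by (rule sum_mono2[OF _ sub]) auto
    then show ?thesis using rows nin by force
  qed
  have D_sum: "(\<Sum>j\<in>{1..n-1}. \<bar>\<Delta> j\<bar>) \<le> 2 * lam"
  proof -
    have "(\<Sum>j\<in>{1..n-1}. \<bar>\<Delta> j\<bar>) \<le> (\<Sum>j\<in>{1..n-1}. \<bar>\<theta> j\<bar> + \<bar>An j\<bar>)"
      unfolding \<Delta>_def An_def by (intro sum_mono) auto
    then show ?thesis using th An_sum by (simp add: sum.distrib)
  qed
  have mu0: "?mu z \<ge> 0" for z by simp
  have zn: "z n * z n = 1" if "z \<in> ?C" for z using config_sq[OF that nin] .
  have split: "z n * hh n \<theta> z = a z + x z" for z
  proof -
    have "\<theta> = (\<lambda>j. An j + \<Delta> j)" unfolding An_def \<Delta>_def by auto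
    then have "hh n \<theta> z = hh n An z + hh n \<Delta> z" using hh_add[of n An \<Delta> z] by simp
    then show ?thesis unfolding a_def x_def by (simp add: algebra_simps)
  qed
  \<comment> \<open>first-order term vanishes\<close>
  have lin0: "(\<Sum>z\<in>?C. \<nu> z * x z) = 0"
  proof -
    have "(\<Sum>z\<in>?C. \<nu> z * x z) = (\<Sum>z\<in>?C. \<Sum>j\<in>{1..n-1}. \<Delta> j * (?mu z * (z n * z j * exp (- z n * hh n An z))))"
    proof (intro sum.cong refl)
      fix z
      show "\<nu> z * x z = (\<Sum>j\<in>{1..n-1}. \<Delta> j * (?mu z * (z n * z j * exp (- z n * hh n An z))))"
        unfolding \<nu>_def x_def a_def hh_def[of n \<Delta> z] by (simp add: sum_distrib_left sum_distrib_right algebra_simps)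
    qed
    also have "\<dots> = (\<Sum>j\<in>{1..n-1}. \<Delta> j * (\<Sum>z\<in>?C. ?mu z * (z n * z j * exp (- z n * hh n An z))))"
      by (subst sum.swap) (simp add: sum_distrib_left)
    also have "\<dots> = (\<Sum>j\<in>{1..n-1}. \<Delta> j * (- mgr n A An j))"
      unfolding mgr_def by (intro sum.cong) (auto simp: sum_negf[symmetric])
    also have "\<dots> = 0"
      using grad_zero[OF n sym] unfolding An_def by (intro sum.neutral) auto
    finally show ?thesis .
  qed
  have diff: "Sf n A \<theta> - Sf n A An = (\<Sum>z\<in>?C. \<nu> z * (exp (- x z) - 1 + x z))"
  proof -
    have "Sf n A \<theta> - Sf n A An = (\<Sum>z\<in>?C. \<nu> z * (exp (- x z) - 1))"
      unfolding Sf_def by (simp add: sum_subtractf[symmetric] split \<nu>_def a_def exp_add[symmetric] algebra_simps)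
    also have "\<dots> = (\<Sum>z\<in>?C. \<nu> z * (exp (- x z) - 1 + x z)) - (\<Sum>z\<in>?C. \<nu> z * x z)"
      by (simp add: sum_subtractf[symmetric] algebra_simps)
    finally show ?thesis using lin0 by simp
  qed
  have nu0: "\<nu> z \<ge> 0" for z unfolding \<nu>_def by simp
  have quad: "(\<Sum>z\<in>?C. \<nu> z * (hh n \<Delta> z)\<^sup>2) / (2 * (1 + 2 * lam)) \<le> (\<Sum>z\<in>?C. \<nu> z * (exp (- x z) - 1 + x z))"
    unfolding sum_divide_distrib
  proof (rule sum_mono)
    fix z assume z: "z \<in> ?C"
    have xx: "(x z)\<^sup>2 = (hh n \<Delta> z)\<^sup>2" unfolding x_def using zn[OF z] by (simp add: power2_eq_square algebra_simps)
    have "\<bar>x z\<bar> \<le> 2 * lam"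
    proof -
      have "\<bar>x z\<bar> \<le> \<bar>hh n \<Delta> z\<bar>" unfolding x_def using config_abs[OF z, of n] by (auto simp: abs_mult intro: mult_left_le_one_le)
      also have "\<dots> \<le> 2 * lam" using hh_abs[OF z, of \<Delta>] D_sum by linarith
      finally show ?thesis .
    qed
    then have "(x z)\<^sup>2 / (2 * (1 + 2 * lam)) \<le> (x z)\<^sup>2 / (2 * (1 + \<bar>x z\<bar>))"
      by (intro divide_left_mono) auto
    also have "\<dots> \<le> exp (- x z) - 1 + x z" by (rule exp_quad_lower)
    finally have "(hh n \<Delta> z)\<^sup>2 / (2 * (1 + 2 * lam)) \<le> exp (- x z) - 1 + x z" using xx by simp
    then show "\<nu> z * (hh n \<Delta> z)\<^sup>2 / (2 * (1 + 2 * lam)) \<le> \<nu> z * (exp (- x z) - 1 + x z)"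
      using nu0[of z] by (simp add: mult_left_mono times_divide_eq_right[symmetric] del: times_divide_eq_right)
  qed
  have ratio: "\<nu> (flip i z) \<ge> exp (- 2 * lam) * \<nu> z" if z: "z \<in> ?C" for z
  proof -
    have fz: "flip i z \<in> ?C" by (rule flip_config[OF iin(1) z])
    have En: "IE n A (flip i z) = IE n A z - 2 * z i * (\<Sum>j\<in>{1..n} - {i}. A i j * z j)"
      using energy_flip[OF iin(1) sym, of z] by simp
    have an: "a (flip i z) = a z - 2 * z n * A n i * z i"
    proof -
      have h1: "hh n An (flip i z) = hh n An z - 2 * An i * z i" by (rule hh_flip_in[OF i])
      have h2: "flip i z n = z n" using iin by (simp add: flip_def)
      show ?thesis unfolding a_def h1 h2 by (simp add: An_def algebra_simps)
    qed
    define s where "s = (\<Sum>j\<in>{1..n} - {i} - {n}. A i j * z j)"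
    have s_eq: "(\<Sum>j\<in>{1..n} - {i}. A i j * z j) = A i n * z n + s"
      unfolding s_def using iin nin by (subst sum.remove[of _ n]) auto
    have s_abs: "\<bar>s\<bar> \<le> lam"
    proof -
      have "\<bar>s\<bar> \<le> (\<Sum>j\<in>{1..n} - {i} - {n}. \<bar>A i j\<bar>)"
        unfolding s_def using config_abs[OF z]
        by (intro order_trans[OF sum_abs] sum_mono) (auto simp: abs_mult intro: mult_left_le)
      also have "\<dots> \<le> (\<Sum>j\<in>{1..n}. \<bar>A i j\<bar>)" by (rule sum_mono2) auto
      also have "\<dots> \<le> lam" using rows iin by auto
      finally show ?thesis .
    qed
    have zi: "\<bar>z i\<bar> \<le> 1" by (rule config_abs[OF z])
    have Ain: "A i n = A n i" using sym iin nin by auto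
    have expo: "IE n A (flip i z) - a (flip i z) = IE n A z - a z - 2 * z i * s"
      unfolding En an s_eq Ain by (simp add: algebra_simps)
    have "\<bar>2 * z i * s\<bar> \<le> 2 * lam"
    proof -
      have "\<bar>z i\<bar> * \<bar>s\<bar> \<le> 1 * \<bar>s\<bar>" using zi by (intro mult_right_mono) auto
      then show ?thesis using s_abs by (simp add: abs_mult)
    qed
    then have ge: "IE n A z - a z - 2 * lam \<le> IE n A (flip i z) - a (flip i z)" unfolding expo by linarith
    have "\<nu> (flip i z) = exp (IE n A (flip i z) - a (flip i z)) / Zp n A"
      unfolding \<nu>_def using fz by (simp add: pmf_ising exp_diff exp_minus field_simps)
    also have "\<dots> \<ge> exp (IE n A z - a z - 2 * lam) / Zp n A"
      using ge Zp_pos[of n A] by (intro divide_right_mono) auto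
    also have "exp (IE n A z - a z - 2 * lam) / Zp n A = exp (- 2 * lam) * \<nu> z"
      unfolding \<nu>_def using z by (simp add: pmf_ising exp_diff exp_minus exp_add field_simps)
    finally show ?thesis .
  qed
  have gap: "(hh n \<Delta> z)\<^sup>2 + (hh n \<Delta> (flip i z))\<^sup>2 \<ge> 2 * (\<Delta> i)\<^sup>2" if z: "z \<in> ?C" for z
  proof -
    have hf: "hh n \<Delta> (flip i z) = hh n \<Delta> z - 2 * \<Delta> i * z i" by (rule hh_flip_in[OF i])
    have zi: "z i * z i = 1" by (rule config_sq[OF z iin(1)])
    have "(hh n \<Delta> z)\<^sup>2 + (hh n \<Delta> z - 2 * \<Delta> i * z i)\<^sup>2 = 2 * (hh n \<Delta> z - \<Delta> i * z i)\<^sup>2 + 2 * (\<Delta> i)\<^sup>2 * (z i * z i)"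
      by (simp add: power2_eq_square algebra_simps)
    also have "\<dots> \<ge> 2 * (\<Delta> i)\<^sup>2" using zi by simp
    finally show ?thesis using hf by simp
  qed
  have pair: "exp (- 2 * lam) * (\<Delta> i)\<^sup>2 * (\<Sum>z\<in>?C. \<nu> z) \<le> (\<Sum>z\<in>?C. \<nu> z * (hh n \<Delta> z)\<^sup>2)"
    by (rule pairing[OF iin(1)]) (use lam nu0 ratio gap in auto)
  have nu_sum: "exp (- lam) \<le> (\<Sum>z\<in>?C. \<nu> z)"
  proof -
    have "(\<Sum>z\<in>?C. ?mu z * exp (- lam)) \<le> (\<Sum>z\<in>?C. \<nu> z)"
    proof (rule sum_mono)
      fix z assume z: "z \<in> ?C"
      have "\<bar>a z\<bar> \<le> lam"
      proof -
        have "\<bar>a z\<bar> \<le> \<bar>hh n An z\<bar>" unfolding a_def using config_abs[OF z, of n] by (auto simp: abs_mult intro: mult_left_le_one_le)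
        also have "\<dots> \<le> lam" using hh_abs[OF z, of An] An_sum by linarith
        finally show ?thesis .
      qed
      then show "?mu z * exp (- lam) \<le> \<nu> z" unfolding \<nu>_def by (intro mult_left_mono) auto
    qed
    then show ?thesis by (simp add: sum_distrib_right[symmetric] sum_pmf_ising)
  qed
  have "exp (- 3 * lam) / (2 * (1 + 2 * lam)) * (\<Delta> i)\<^sup>2 = exp (- 2 * lam) * (\<Delta> i)\<^sup>2 * exp (- lam) / (2 * (1 + 2 * lam))"
    by (simp add: exp_add[symmetric] algebra_simps)
  also have "\<dots> \<le> exp (- 2 * lam) * (\<Delta> i)\<^sup>2 * (\<Sum>z\<in>?C. \<nu> z) / (2 * (1 + 2 * lam))"
    using nu_sum lam by (intro divide_right_mono mult_left_mono) auto
  also have "\<dots> \<le> (\<Sum>z\<in>?C. \<nu> z * (hh n \<Delta> z)\<^sup>2) / (2 * (1 + 2 * lam))"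
    using pair lam by (intro divide_right_mono) auto
  also have "\<dots> \<le> Sf n A \<theta> - Sf n A An" using quad diff by simp
  finally show ?thesis unfolding \<Delta>_def An_def .
qed


lemma expectation_pair_mult:
  fixes u :: "'a \<Rightarrow> real" and v :: "'b \<Rightarrow> real"
  assumes M: "finite (set_pmf M)" and N: "finite (set_pmf N)"
  shows "measure_pmf.expectation (pair_pmf M N) (\<lambda>x. u (fst x) * v (snd x))
       = measure_pmf.expectation M u * measure_pmf.expectation N v"
proof -
  have "measure_pmf.expectation (pair_pmf M N) (\<lambda>x. u (fst x) * v (snd x))
      = (\<Sum>x\<in>set_pmf M \<times> set_pmf N. u (fst x) * v (snd x) * pmf (pair_pmf M N) x)"
    by (rule integral_measure_pmf_real) (use M N in auto)
  also have "\<dots> = (\<Sum>x\<in>set_pmf M \<times> set_pmf N. (u (fst x) * pmf M (fst x)) * (v (snd x) * pmf N (snd x)))"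
    by (intro sum.cong refl) (auto simp: pmf_pair)
  also have "\<dots> = (\<Sum>a\<in>set_pmf M. \<Sum>b\<in>set_pmf N. (u a * pmf M a) * (v b * pmf N b))"
    by (simp add: sum.cartesian_product case_prod_beta)
  also have "\<dots> = (\<Sum>a\<in>set_pmf M. u a * pmf M a) * (\<Sum>b\<in>set_pmf N. v b * pmf N b)"
    by (simp add: sum_product)
  also have "(\<Sum>a\<in>set_pmf M. u a * pmf M a) = measure_pmf.expectation M u"
    by (rule integral_measure_pmf_real[symmetric]) (use M in auto)
  also have "(\<Sum>b\<in>set_pmf N. v b * pmf N b) = measure_pmf.expectation N v"
    by (rule integral_measure_pmf_real[symmetric]) (use N in auto)
  finally show ?thesis .
qed

lemma finite_set_Pi_bool:
  fixes p :: "'a \<Rightarrow> bool pmf"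
  assumes "finite A"
  shows "finite (set_pmf (Pi_pmf A d p))"
proof (rule finite_subset[OF set_Pi_pmf_subset'[OF assms]])
  show "finite (PiE_dflt A d (set_pmf \<circ> p))"
    by (intro finite_PiE_dflt assms) (auto intro: finite_subset[of _ UNIV])
qed

lemma expectation_prod_Pi_bool:
  fixes f :: "'a \<Rightarrow> bool \<Rightarrow> real" and p :: "'a \<Rightarrow> bool pmf"
  assumes "finite A"
  shows "measure_pmf.expectation (Pi_pmf A d p) (\<lambda>y. \<Prod>x\<in>A. f x (y x))
       = (\<Prod>x\<in>A. measure_pmf.expectation (p x) (f x))"
  using assms
proof (induction A rule: finite_induct)
  case empty
  then show ?case by simp
next
  case (insert x A)
  have eq: "(\<Prod>x'\<in>insert x A. f x' ((g(x := y)) x')) = f x y * (\<Prod>x'\<in>A. f x' (g x'))" for g y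
  proof -
    have "(\<Prod>x'\<in>A. f x' ((g(x := y)) x')) = (\<Prod>x'\<in>A. f x' (g x'))"
      using insert by (intro prod.cong) auto
    then show ?thesis using insert by simp
  qed
  have eq': "(\<Prod>x'\<in>A. f x' (if x' = x then y else g x')) = (\<Prod>x'\<in>A. f x' (g x'))" for g y
    using insert by (intro prod.cong) auto
  have "measure_pmf.expectation (Pi_pmf (insert x A) d p) (\<lambda>y. \<Prod>x\<in>insert x A. f x (y x))
      = measure_pmf.expectation (pair_pmf (p x) (Pi_pmf A d p)) (\<lambda>z. f x (fst z) * (\<Prod>x'\<in>A. f x' (snd z x')))"
    using insert by (simp add: Pi_pmf_insert integral_map_pmf case_prod_unfold eq')
  also have "\<dots> = measure_pmf.expectation (p x) (f x) * measure_pmf.expectation (Pi_pmf A d p) (\<lambda>g. \<Prod>x'\<in>A. f x' (g x'))"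
    by (rule expectation_pair_mult) (auto intro: finite_subset[of _ UNIV] finite_set_Pi_bool insert)
  also have "\<dots> = (\<Prod>x\<in>insert x A. measure_pmf.expectation (p x) (f x))"
    using insert by simp
  finally show ?case .
qed

definition mask :: "(nat \<Rightarrow> real) \<Rightarrow> (nat \<Rightarrow> bool) \<Rightarrow> (nat \<Rightarrow> real)" where
  "mask z c = (\<lambda>i. if c i then z i else 0)"

lemma miss_pmf_alt:
  "miss_pmf n A p = ising_pmf n A \<bind> (\<lambda>z. map_pmf (mask z) (Pi_pmf {1..n} False (\<lambda>i. bernoulli_pmf (1 - p i))))"
  unfolding miss_pmf_def map_pmf_def mask_def by simp

lemma set_pmf_miss: "X \<in> set_pmf (miss_pmf n A p) \<Longrightarrow> \<bar>X j\<bar> \<le> 1"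
  using set_pmf_ising[of n A] config_abs
  by (auto simp: miss_pmf_alt mask_def)

lemma expectation_miss:
  "measure_pmf.expectation (miss_pmf n A p) h
    = (\<Sum>z\<in>ising_configs n. pmf (ising_pmf n A) z *
         measure_pmf.expectation (Pi_pmf {1..n} False (\<lambda>i. bernoulli_pmf (1 - p i))) (\<lambda>c. h (mask z c)))"
  unfolding miss_pmf_alt
  by (subst pmf_expectation_bind[where A = "ising_configs n"])
     (auto simp: set_pmf_ising integral_map_pmf intro!: finite_set_Pi_bool)

lemma unbiased:
  assumes n: "n \<ge> 2" and p: "\<forall>i\<in>{1..n}. 0 \<le> p i \<and> p i < 1" and i: "i \<in> {1..n-1}"
  shows "measure_pmf.expectation (miss_pmf n A p) (\<lambda>X. g_miss n p w X i) = mgr n A (\<lambda>j. w j - w (n - 1 + j)) i"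
proof -
  define v where "v = (\<lambda>j. w j - w (n - 1 + j))"
  let ?P = "Pi_pmf {1..n} False (\<lambda>i. bernoulli_pmf (1 - p i))"
  have inner: "measure_pmf.expectation ?P (\<lambda>c. g_miss n p w (mask z c) i) = - z n * z i * exp (- z n * hh n v z)"
    for z
  proof -
    define F where "F = (\<lambda>j b. if j = n then - (if b then z n else 0) / (1 - p n)
         else if j = i then (if b then exp (- v i * z n * z i) * z i else 0) / (1 - p i)
         else (if b then exp (- v j * z n * z j) - p j else 1 - p j) / (1 - p j))"
    have iin: "i \<noteq> n" "i \<in> {1..n}" using i n by auto
    have set_eq: "{1..n} = insert n (insert i ({1..n-1} - {i}))" using i n by auto
    have prod_split: "(\<Prod>j\<in>{1..n}. G j) = G n * (G i * (\<Prod>j\<in>{1..n-1} - {i}. G j))" for G :: "nat \<Rightarrow> real"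
    proof -
      have "(\<Prod>j\<in>{1..n}. G j) = G n * (\<Prod>j\<in>{1..n} - {n}. G j)" by (rule prod.remove) (use n in auto)
      also have "{1..n} - {n} = {1..n-1}" using n by auto
      also have "(\<Prod>j\<in>{1..n-1}. G j) = G i * (\<Prod>j\<in>{1..n-1} - {i}. G j)" by (rule prod.remove) (use i in auto)
      finally show ?thesis .
    qed
    have pw: "g_miss n p w (mask z c) i = (\<Prod>j\<in>{1..n}. F j (c j))" for c
    proof (cases "c n")
      case True
      have rest: "(\<Prod>j\<in>{1..n-1} - {i}. F j (c j)) = (\<Prod>j\<in>{1..n-1} - {i}. (exp (- v j * mask z c n * mask z c j) - p j) / (1 - p j))"
      proof (intro prod.cong refl)
        fix j assume j: "j \<in> {1..n-1} - {i}"
        then have "j \<noteq> n" "j \<noteq> i" using n by auto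
        moreover have "j \<in> {1..n}" using j by auto
        then have "1 - p j \<noteq> 0" using p by fastforce
        ultimately show "F j (c j) = (exp (- v j * mask z c n * mask z c j) - p j) / (1 - p j)"
          using True by (auto simp: F_def mask_def)
      qed
      have Fi: "F i (c i) = exp (- v i * mask z c n * mask z c i) * mask z c i / (1 - p i)"
        using True iin by (auto simp: F_def mask_def)
      have Fn: "F n (c n) = - (mask z c n / (1 - p n))" using True by (simp add: F_def mask_def)
      show ?thesis unfolding prod_split g_miss_def Let_def v_def[symmetric] rest Fi Fn by simp
    next
      case False
      then show ?thesis unfolding prod_split g_miss_def by (simp add: F_def mask_def)
    qed
    have "measure_pmf.expectation ?P (\<lambda>c. g_miss n p w (mask z c) i)
        = measure_pmf.expectation ?P (\<lambda>c. \<Prod>j\<in>{1..n}. F j (c j))"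
      by (simp add: pw)
    also have "\<dots> = (\<Prod>j\<in>{1..n}. measure_pmf.expectation (bernoulli_pmf (1 - p j)) (F j))"
      by (rule expectation_prod_Pi_bool) simp
    also have "\<dots> = (\<Prod>j\<in>{1..n}. if j = n then - z n else if j = i then exp (- v i * z n * z i) * z i else exp (- v j * z n * z j))"
    proof (intro prod.cong refl)
      fix j assume j: "j \<in> {1..n}"
      have pj: "0 \<le> p j" "p j < 1" using p j by auto
      show "measure_pmf.expectation (bernoulli_pmf (1 - p j)) (F j) = (if j = n then - z n else if j = i then exp (- v i * z n * z i) * z i else exp (- v j * z n * z j))"
        using pj by (subst integral_bernoulli_pmf) (auto simp: F_def field_simps)
    qed
    also have "\<dots> = - z n * (exp (- v i * z n * z i) * z i * (\<Prod>j\<in>{1..n-1} - {i}. exp (- v j * z n * z j)))"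
      unfolding prod_split using iin by (intro arg_cong2[where f = "(*)"] arg_cong2[where f = "(*)"] prod.cong) auto
    also have "(\<Prod>j\<in>{1..n-1} - {i}. exp (- v j * z n * z j)) = exp (\<Sum>j\<in>{1..n-1} - {i}. - v j * z n * z j)"
      by (simp add: exp_sum)
    also have "exp (- v i * z n * z i) * z i * exp (\<Sum>j\<in>{1..n-1} - {i}. - v j * z n * z j)
        = z i * exp (\<Sum>j\<in>{1..n-1}. - v j * z n * z j)"
    proof -
      have s: "(\<Sum>j\<in>{1..n-1}. - v j * z n * z j) = - v i * z n * z i + (\<Sum>j\<in>{1..n-1} - {i}. - v j * z n * z j)"
        by (rule sum.remove) (use i in auto)
      show ?thesis unfolding s exp_add by (simp only: ac_simps)
    qed
    also have "(\<Sum>j\<in>{1..n-1}. - v j * z n * z j) = - z n * hh n v z"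
      unfolding hh_def by (simp add: sum_distrib_left sum_negf algebra_simps)
    finally show ?thesis by simp
  qed
  show ?thesis
    unfolding expectation_miss mgr_def v_def[symmetric] inner by simp
qed


lemma split_sum_2n:
  fixes f :: "nat \<Rightarrow> real"
  assumes n: "n \<ge> 2"
  shows "(\<Sum>k\<in>{1..2*n-1}. f k) = (\<Sum>j\<in>{1..n-1}. f j + f (n - 1 + j)) + f (2*n-1)"
proof -
  have bij: "bij_betw (\<lambda>j. n - 1 + j) {1..n-1} {n..2*n-2}"
    by (rule bij_betwI[where g = "\<lambda>k. k - (n - 1)"]) (use n in auto)
  have u: "{1..2*n-1} = {1..n-1} \<union> {n..2*n-2} \<union> {2*n-1}" using n by auto
  have "(\<Sum>k\<in>{1..2*n-1}. f k) = (\<Sum>k\<in>{1..n-1}. f k) + (\<Sum>k\<in>{n..2*n-2}. f k) + f (2*n-1)"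
    unfolding u using n by (subst sum.union_disjoint; auto)+
  also have "(\<Sum>k\<in>{n..2*n-2}. f k) = (\<Sum>j\<in>{1..n-1}. f (n - 1 + j))"
    using sum.reindex_bij_betw[OF bij, of f] by simp
  finally show ?thesis by (simp add: sum.distrib)
qed

lemma G_lo: "j \<in> {1..n-1} \<Longrightarrow> G_miss n p w X j = g_miss n p w X j"
  by (simp add: G_miss_def)

lemma G_hi:
  assumes "n \<ge> 2" "j \<in> {1..n-1}"
  shows "G_miss n p w X (n - 1 + j) = - g_miss n p w X j"
proof -
  have a: "\<not> (1 \<le> n - 1 + j \<and> n - 1 + j \<le> n - 1)" "n \<le> n - 1 + j \<and> n - 1 + j \<le> 2 * n - 2"
    "n - 1 + j - (n - 1) = j" using assms by auto
  show ?thesis unfolding G_miss_def using a by presburger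
qed

lemma G_last:
  assumes "n \<ge> 2" shows "G_miss n p w X (2*n-1) = 0"
proof -
  have a: "\<not> (1 \<le> 2*n-1 \<and> 2*n-1 \<le> n - 1)" "\<not> (n \<le> 2*n-1 \<and> 2*n-1 \<le> 2 * n - 2)"
    using assms by auto
  show ?thesis unfolding G_miss_def using a by presburger
qed

lemma dot_G:
  assumes "n \<ge> 2"
  shows "(\<Sum>k\<in>{1..2*n-1}. u k * G_miss n p w X k) = (\<Sum>i\<in>{1..n-1}. (u i - u (n - 1 + i)) * g_miss n p w X i)"
proof -
  have "(\<Sum>j\<in>{1..n-1}. u j * G_miss n p w X j + u (n - 1 + j) * G_miss n p w X (n - 1 + j))
      = (\<Sum>i\<in>{1..n-1}. (u i - u (n - 1 + i)) * g_miss n p w X i)"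
  proof (intro sum.cong refl)
    fix j assume j: "j \<in> {1..n-1}"
    show "u j * G_miss n p w X j + u (n - 1 + j) * G_miss n p w X (n - 1 + j) = (u j - u (n - 1 + j)) * g_miss n p w X j"
      unfolding G_lo[OF j] G_hi[OF assms j] by (simp add: algebra_simps)
  qed
  then show ?thesis unfolding split_sum_2n[OF assms] G_last[OF assms] by simp
qed

lemma vsum_le:
  fixes w :: "nat \<Rightarrow> real"
  assumes n: "n \<ge> 2" and nn: "\<forall>i\<in>{1..2*n-1}. w i \<ge> 0"
  shows "(\<Sum>j\<in>{1..n-1}. \<bar>w j - w (n - 1 + j)\<bar>) \<le> (\<Sum>k\<in>{1..2*n-1}. w k)"
proof -
  have "(\<Sum>j\<in>{1..n-1}. \<bar>w j - w (n - 1 + j)\<bar>) \<le> (\<Sum>j\<in>{1..n-1}. w j + w (n - 1 + j))"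
  proof (rule sum_mono)
    fix j assume j: "j \<in> {1..n-1}"
    have m1: "j \<in> {1..2*n-1}" and m2: "n - 1 + j \<in> {1..2*n-1}" using n j by auto
    have "w j \<ge> 0" "w (n - 1 + j) \<ge> 0" using bspec[OF nn m1] bspec[OF nn m2] by auto
    then show "\<bar>w j - w (n - 1 + j)\<bar> \<le> w j + w (n - 1 + j)" by linarith
  qed
  also have "\<dots> \<le> (\<Sum>k\<in>{1..2*n-1}. w k)"
    unfolding split_sum_2n[OF n] using nn n by auto
  finally show ?thesis .
qed

locale algo =
  fixes n :: nat and p :: "nat \<Rightarrow> real" and lam \<eta> q :: real
  assumes n2: "n \<ge> 2"
    and p_bnd: "\<forall>i\<in>{1..n}. 0 \<le> p i \<and> p i < 1"
    and q_pos: "q > 0" and q_le: "\<forall>i\<in>{1..n}. q \<le> 1 - p i"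
    and lam_pos: "lam > 0" and eta_pos: "\<eta> > 0"
    and eta_small: "\<eta> * (2 * (exp (lam / q) / q\<^sup>2)) \<le> 1/4"
begin

definition "B = exp (lam / q) / q\<^sup>2"
definition "NN = 2 * n - 1"

lemma B_pos: "B > 0" unfolding B_def using q_pos by simp

lemma q_le1: "q \<le> 1" using q_le p_bnd n2 by force

definition splx :: "(nat \<Rightarrow> real) \<Rightarrow> bool" where
  "splx w \<longleftrightarrow> (\<forall>i\<in>{1..NN}. w i > 0) \<and> (\<Sum>i\<in>{1..NN}. w i) = lam"

lemma g_bound:
  assumes vs: "(\<Sum>j\<in>{1..n-1}. \<bar>w j - w (n - 1 + j)\<bar>) \<le> lam"
    and X: "\<And>j. \<bar>X j\<bar> \<le> 1" and i: "i \<in> {1..n-1}"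
  shows "\<bar>g_miss n p w X i\<bar> \<le> B"
proof -
  define v where "v = (\<lambda>j. w j - w (n - 1 + j))"
  have pin: "\<And>j. j \<in> {1..n} \<Longrightarrow> 0 \<le> p j \<and> p j < 1 \<and> q \<le> 1 - p j" using p_bnd q_le by auto
  have iN: "i \<in> {1..n}" using i by auto
  have nN: "n \<in> {1..n}" using n2 by auto
  have XnXj: "\<bar>v j * X n * X j\<bar> \<le> \<bar>v j\<bar>" for j
  proof -
    have "\<bar>X n * X j\<bar> \<le> 1" using X[of n] X[of j] by (simp add: abs_mult mult_le_one)
    then have "\<bar>v j\<bar> * \<bar>X n * X j\<bar> \<le> \<bar>v j\<bar> * 1" by (intro mult_left_mono) auto
    then show ?thesis by (simp add: abs_mult mult.assoc)
  qed
  have f1: "\<bar>X n / (1 - p n)\<bar> \<le> 1 / q"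
  proof -
    have "\<bar>X n / (1 - p n)\<bar> = \<bar>X n\<bar> / (1 - p n)" using pin[OF nN] by (simp add: abs_div)
    also have "\<dots> \<le> 1 / (1 - p n)" using X[of n] pin[OF nN] by (intro divide_right_mono) auto
    also have "\<dots> \<le> 1 / q" using pin[OF nN] q_pos by (intro divide_left_mono) auto
    finally show ?thesis .
  qed
  have f2: "\<bar>exp (- v i * X n * X i) * X i / (1 - p i)\<bar> \<le> exp (\<bar>v i\<bar> / q) / q"
  proof -
    have "exp (- v i * X n * X i) \<le> exp \<bar>v i\<bar>" using XnXj[of i] by simp
    also have "\<dots> \<le> exp (\<bar>v i\<bar> / q)" using q_pos q_le1 by (simp add: le_divide_eq mult_left_le)
    finally have e: "exp (- v i * X n * X i) \<le> exp (\<bar>v i\<bar> / q)" .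
    have "\<bar>exp (- v i * X n * X i) * X i / (1 - p i)\<bar> = exp (- v i * X n * X i) * \<bar>X i\<bar> / (1 - p i)"
      using pin[OF iN] by (simp add: abs_mult abs_div)
    also have "\<dots> \<le> exp (\<bar>v i\<bar> / q) * 1 / (1 - p i)"
      using pin[OF iN] e X[of i] by (intro divide_right_mono mult_mono) auto
    also have "\<dots> \<le> exp (\<bar>v i\<bar> / q) / q" using pin[OF iN] q_pos by (simp add: divide_left_mono)
    finally show ?thesis .
  qed
  have f3: "\<bar>\<Prod>j\<in>{1..n-1} - {i}. (exp (- v j * X n * X j) - p j) / (1 - p j)\<bar> \<le> exp (\<Sum>j\<in>{1..n-1} - {i}. \<bar>v j\<bar> / q)"
  proof -
    have "\<bar>\<Prod>j\<in>{1..n-1} - {i}. (exp (- v j * X n * X j) - p j) / (1 - p j)\<bar> = (\<Prod>j\<in>{1..n-1} - {i}. \<bar>(exp (- v j * X n * X j) - p j) / (1 - p j)\<bar>)"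
      by (simp add: abs_prod)
    also have "\<dots> \<le> (\<Prod>j\<in>{1..n-1} - {i}. exp (\<bar>v j\<bar> / q))"
    proof (rule prod_mono)
      fix j assume j: "j \<in> {1..n-1} - {i}"
      then have jN: "j \<in> {1..n}" by auto
      show "0 \<le> \<bar>(exp (- v j * X n * X j) - p j) / (1 - p j)\<bar> \<and> \<bar>(exp (- v j * X n * X j) - p j) / (1 - p j)\<bar> \<le> exp (\<bar>v j\<bar> / q)"
        using factor_bound[of "p j" q "- v j * X n * X j" "\<bar>v j\<bar>"] pin[OF jN] q_pos XnXj[of j] by auto
    qed
    also have "\<dots> = exp (\<Sum>j\<in>{1..n-1} - {i}. \<bar>v j\<bar> / q)" by (simp add: exp_sum)
    finally show ?thesis .
  qed
  have "\<bar>g_miss n p w X i\<bar> = \<bar>X n / (1 - p n)\<bar> * \<bar>exp (- v i * X n * X i) * X i / (1 - p i)\<bar>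
      * \<bar>\<Prod>j\<in>{1..n-1} - {i}. (exp (- v j * X n * X j) - p j) / (1 - p j)\<bar>"
    unfolding g_miss_def Let_def v_def by (simp add: abs_mult)
  also have "\<dots> \<le> (1 / q) * (exp (\<bar>v i\<bar> / q) / q) * exp (\<Sum>j\<in>{1..n-1} - {i}. \<bar>v j\<bar> / q)"
    using f1 f2 f3 q_pos by (intro mult_mono) auto
  also have "\<dots> = exp ((\<Sum>j\<in>{1..n-1}. \<bar>v j\<bar>) / q) / q\<^sup>2"
  proof -
    have "(\<Sum>j\<in>{1..n-1}. \<bar>v j\<bar> / q) = \<bar>v i\<bar> / q + (\<Sum>j\<in>{1..n-1} - {i}. \<bar>v j\<bar> / q)"
      by (rule sum.remove) (use i in auto)
    then show ?thesis by (simp add: sum_divide_distrib[symmetric] exp_add[symmetric] power2_eq_square)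
  qed
  also have "\<dots> \<le> B" unfolding B_def using vs q_pos by (simp add: v_def divide_right_mono)
  finally show ?thesis .
qed


lemma NN_ge: "NN \<ge> 3" unfolding NN_def using n2 by auto

lemma splx_vs:
  assumes "splx w" shows "(\<Sum>j\<in>{1..n-1}. \<bar>w j - w (n - 1 + j)\<bar>) \<le> lam"
  using vsum_le[OF n2, of w] assms unfolding splx_def NN_def by (auto intro: less_imp_le)

lemma G_bound:
  assumes vs: "(\<Sum>j\<in>{1..n-1}. \<bar>w j - w (n - 1 + j)\<bar>) \<le> lam"
    and X: "\<And>j. \<bar>X j\<bar> \<le> 1"
  shows "\<bar>G_miss n p w X k\<bar> \<le> B"
proof -
  have a: "\<bar>g_miss n p w X i\<bar> \<le> B" if "i \<in> {1..n-1}" for i by (rule g_bound[OF vs X that])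
  show ?thesis
  proof (cases "1 \<le> k \<and> k \<le> n - 1")
    case True then show ?thesis using a[of k] by (simp add: G_miss_def)
  next
    case False
    show ?thesis
    proof (cases "n \<le> k \<and> k \<le> 2 * n - 2")
      case True
      then have "k - (n - 1) \<in> {1..n-1}" using n2 by auto
      moreover have "G_miss n p w X k = - g_miss n p w X (k - (n-1))" unfolding G_miss_def using True False by auto
      ultimately show ?thesis using a[of "k - (n-1)"] by simp
    next
      case False2: False
      have "G_miss n p w X k = 0" unfolding G_miss_def using False False2 by auto
      then show ?thesis using B_pos by simp
    qed
  qed
qed

definition CC :: "(nat \<Rightarrow> real) \<Rightarrow> (nat \<Rightarrow> real) \<Rightarrow> real" where
  "CC w X = (\<Sum>i\<in>{1..NN}. w i * G_miss n p w X i) / lam"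

lemma step_eq: "smg_step n p lam \<eta> w X i = w i * (1 - \<eta> * (G_miss n p w X i - CC w X))"
  unfolding smg_step_def CC_def NN_def Let_def by (simp add: algebra_simps)

lemma step_x:
  assumes w: "splx w" and X: "\<And>j. \<bar>X j\<bar> \<le> 1"
  shows "\<bar>\<eta> * (G_miss n p w X i - CC w X)\<bar> \<le> 1/4"
proof -
  have Gb: "\<And>k. \<bar>G_miss n p w X k\<bar> \<le> B" by (rule G_bound[OF splx_vs[OF w] X])
  have "\<bar>\<Sum>k\<in>{1..NN}. w k * G_miss n p w X k\<bar> \<le> (\<Sum>k\<in>{1..NN}. w k * B)"
  proof (rule order_trans[OF sum_abs], rule sum_mono)
    fix k assume k: "k \<in> {1..NN}"
    have "w k > 0" using w k unfolding splx_def by auto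
    then show "\<bar>w k * G_miss n p w X k\<bar> \<le> w k * B" using Gb[of k] by (simp add: abs_mult mult_left_mono)
  qed
  also have "\<dots> = (\<Sum>k\<in>{1..NN}. w k) * B" by (simp add: sum_distrib_right)
  also have "\<dots> = lam * B" using w unfolding splx_def by simp
  finally have "\<bar>CC w X\<bar> \<le> B" unfolding CC_def using lam_pos by (simp add: abs_div divide_le_eq mult.commute)
  then have "\<bar>G_miss n p w X i - CC w X\<bar> \<le> 2 * B" using Gb[of i] by linarith
  then have "\<eta> * \<bar>G_miss n p w X i - CC w X\<bar> \<le> \<eta> * (2 * B)" using eta_pos by (intro mult_left_mono) auto
  also have "\<dots> \<le> 1/4" using eta_small unfolding B_def .
  finally show ?thesis using eta_pos by (simp add: abs_mult)
qed

lemma step_splx: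
  assumes w: "splx w" and X: "\<And>j. \<bar>X j\<bar> \<le> 1"
  shows "splx (smg_step n p lam \<eta> w X)"
  unfolding splx_def
proof
  show "\<forall>i\<in>{1..NN}. 0 < smg_step n p lam \<eta> w X i"
  proof
    fix i assume i: "i \<in> {1..NN}"
    have "\<bar>\<eta> * (G_miss n p w X i - CC w X)\<bar> \<le> 1/4" by (rule step_x[OF w X])
    then have "1 - \<eta> * (G_miss n p w X i - CC w X) > 0" by linarith
    moreover have "w i > 0" using w i unfolding splx_def by auto
    ultimately show "0 < smg_step n p lam \<eta> w X i" unfolding step_eq by simp
  qed
  have "(\<Sum>i\<in>{1..NN}. smg_step n p lam \<eta> w X i)
      = (\<Sum>i\<in>{1..NN}. w i) - \<eta> * (\<Sum>i\<in>{1..NN}. w i * G_miss n p w X i) + \<eta> * CC w X * (\<Sum>i\<in>{1..NN}. w i)"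
    unfolding step_eq by (simp add: algebra_simps sum_subtractf sum.distrib sum_distrib_left sum_distrib_right)
  also have "\<dots> = lam" using w lam_pos unfolding splx_def CC_def by simp
  finally show "(\<Sum>i\<in>{1..NN}. smg_step n p lam \<eta> w X i) = lam" .
qed

abbreviation W where "W xs k \<equiv> smg_iterate n p lam \<eta> xs k"

lemma iter_splx:
  assumes "\<And>t j. t \<in> {1..k} \<Longrightarrow> \<bar>xs t j\<bar> \<le> 1"
  shows "splx (W xs k)"
  using assms
proof (induction k)
  case 0
  have N0: "real NN > 0" using NN_ge by simp
  have e: "W xs 0 = (\<lambda>i. lam / real NN)" by (simp add: NN_def)
  show ?case unfolding splx_def e using N0 lam_pos by simp
next
  case (Suc k)
  have "splx (W xs k)" by (rule Suc.IH) (use Suc.prems in auto)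
  then show ?case by (simp add: step_splx Suc.prems)
qed

lemma iter_dep:
  assumes "\<And>t. t \<in> {1..k} \<Longrightarrow> xs t = ys t"
  shows "W xs k = W ys k"
  using assms by (induction k) auto

lemma iter_le_lam:
  assumes "splx w" "i \<in> {1..NN}" shows "w i \<le> lam"
proof -
  have "w i \<le> (\<Sum>j\<in>{1..NN}. w j)"
    by (rule member_le_sum) (use assms in \<open>auto simp: splx_def intro: less_imp_le\<close>)
  then show ?thesis using assms by (simp add: splx_def)
qed

lemma regret:
  assumes X: "\<And>t j. t \<in> {1..T} \<Longrightarrow> \<bar>xs t j\<bar> \<le> 1"
    and ws0: "\<forall>i\<in>{1..NN}. ws i \<ge> 0" and wsum: "(\<Sum>i\<in>{1..NN}. ws i) = lam"
  shows "(\<Sum>k<T. \<Sum>i\<in>{1..NN}. (W xs k i - ws i) * G_miss n p (W xs k) (xs (Suc k)) i)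
          \<le> lam * ln NN / \<eta> + 8 * real T * \<eta> * B\<^sup>2 * lam"
proof -
  define \<Phi> where "\<Phi> = (\<lambda>k. \<Sum>i\<in>{1..NN}. ws i * ln (W xs k i))"
  define R where "R = (\<lambda>k. \<Sum>i\<in>{1..NN}. (W xs k i - ws i) * G_miss n p (W xs k) (xs (Suc k)) i)"
  have stepk: "\<eta> * R k \<le> \<Phi> (Suc k) - \<Phi> k + 8 * \<eta>\<^sup>2 * B\<^sup>2 * lam" if k: "k < T" for k
  proof -
    let ?w = "W xs k" and ?X = "xs (Suc k)"
    let ?x = "\<lambda>i. \<eta> * (G_miss n p ?w ?X i - CC ?w ?X)"
    have wk: "splx ?w" by (rule iter_splx) (use X k in auto)
    have Xk: "\<And>j. \<bar>?X j\<bar> \<le> 1" using X k by auto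
    have xb: "\<bar>?x i\<bar> \<le> 1/4" for i by (rule step_x[OF wk Xk])
    have xsq: "(?x i)\<^sup>2 \<le> 4 * \<eta>\<^sup>2 * B\<^sup>2" for i
    proof -
      have Gb: "\<And>k. \<bar>G_miss n p ?w ?X k\<bar> \<le> B" by (rule G_bound[OF splx_vs[OF wk] Xk])
      have "\<bar>CC ?w ?X\<bar> \<le> B"
      proof -
        have "\<bar>\<Sum>k\<in>{1..NN}. ?w k * G_miss n p ?w ?X k\<bar> \<le> (\<Sum>k\<in>{1..NN}. ?w k * B)"
        proof (rule order_trans[OF sum_abs], rule sum_mono)
          fix k assume k: "k \<in> {1..NN}"
          have "?w k > 0" using wk k unfolding splx_def by auto
          then show "\<bar>?w k * G_miss n p ?w ?X k\<bar> \<le> ?w k * B" using Gb[of k] by (simp add: abs_mult mult_left_mono)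
        qed
        also have "\<dots> = (\<Sum>k\<in>{1..NN}. ?w k) * B" by (simp add: sum_distrib_right)
        also have "\<dots> = lam * B" using wk unfolding splx_def by simp
        finally show ?thesis unfolding CC_def using lam_pos by (simp add: abs_div divide_le_eq mult.commute)
      qed
      then have "\<bar>G_miss n p ?w ?X i - CC ?w ?X\<bar> \<le> 2 * B" using Gb[of i] by linarith
      then have "\<bar>?x i\<bar> \<le> \<eta> * (2 * B)" using eta_pos by (simp add: abs_mult mult_left_mono)
      then have "\<bar>?x i\<bar>\<^sup>2 \<le> (\<eta> * (2 * B))\<^sup>2" by (intro power_mono) auto
      then show ?thesis by (simp add: power_mult_distrib)
    qed
    have lnstep: "ln (W xs (Suc k) i) = ln (?w i) + ln (1 - ?x i)" if i: "i \<in> {1..NN}" for i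
    proof -
      have "?w i > 0" using wk i unfolding splx_def by auto
      moreover have "1 - ?x i > 0" using xb[of i] by linarith
      ultimately show ?thesis by (simp add: step_eq ln_mult)
    qed
    have "\<Phi> (Suc k) - \<Phi> k = (\<Sum>i\<in>{1..NN}. ws i * ln (W xs (Suc k) i) - ws i * ln (?w i))"
      unfolding \<Phi>_def by (simp only: sum_subtractf)
    also have "\<dots> = (\<Sum>i\<in>{1..NN}. ws i * ln (1 - ?x i))"
    proof (intro sum.cong refl)
      fix i assume i: "i \<in> {1..NN}"
      show "ws i * ln (W xs (Suc k) i) - ws i * ln (?w i) = ws i * ln (1 - ?x i)"
        unfolding lnstep[OF i] by (simp add: algebra_simps)
    qed
    also have "\<dots> \<ge> (\<Sum>i\<in>{1..NN}. ws i * (- ?x i) - ws i * (8 * \<eta>\<^sup>2 * B\<^sup>2))"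
    proof (rule sum_mono)
      fix i assume i: "i \<in> {1..NN}"
      have "- ?x i - 2 * (?x i)\<^sup>2 \<le> ln (1 - ?x i)" by (rule ln_lower2) (use xb[of i] in auto)
      moreover have "2 * (?x i)\<^sup>2 \<le> 8 * \<eta>\<^sup>2 * B\<^sup>2" using xsq[of i] by linarith
      ultimately have "- ?x i - 8 * \<eta>\<^sup>2 * B\<^sup>2 \<le> ln (1 - ?x i)" by linarith
      then have "ws i * (- ?x i - 8 * \<eta>\<^sup>2 * B\<^sup>2) \<le> ws i * ln (1 - ?x i)"
        using ws0 i by (intro mult_left_mono) auto
      then show "ws i * (- ?x i) - ws i * (8 * \<eta>\<^sup>2 * B\<^sup>2) \<le> ws i * ln (1 - ?x i)"
        by (simp add: algebra_simps)
    qed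
    also have "(\<Sum>i\<in>{1..NN}. ws i * (- ?x i) - ws i * (8 * \<eta>\<^sup>2 * B\<^sup>2))
        = (\<Sum>i\<in>{1..NN}. (- \<eta>) * (ws i * G_miss n p ?w ?X i) + (\<eta> * CC ?w ?X) * ws i - (8 * \<eta>\<^sup>2 * B\<^sup>2) * ws i)"
      by (rule sum.cong) (simp_all add: algebra_simps)
    also have "\<dots> = - \<eta> * (\<Sum>i\<in>{1..NN}. ws i * G_miss n p ?w ?X i) + \<eta> * CC ?w ?X * (\<Sum>i\<in>{1..NN}. ws i)
          - 8 * \<eta>\<^sup>2 * B\<^sup>2 * (\<Sum>i\<in>{1..NN}. ws i)"
      by (simp only: sum.distrib sum_subtractf sum_distrib_left)
    also have "\<eta> * CC ?w ?X * (\<Sum>i\<in>{1..NN}. ws i) = \<eta> * (\<Sum>i\<in>{1..NN}. ?w i * G_miss n p ?w ?X i)"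
      unfolding wsum CC_def using lam_pos by simp
    finally have "- \<eta> * (\<Sum>i\<in>{1..NN}. ws i * G_miss n p ?w ?X i) + \<eta> * (\<Sum>i\<in>{1..NN}. ?w i * G_miss n p ?w ?X i)
          - 8 * \<eta>\<^sup>2 * B\<^sup>2 * lam \<le> \<Phi> (Suc k) - \<Phi> k" unfolding wsum .
    moreover have "\<eta> * R k = - \<eta> * (\<Sum>i\<in>{1..NN}. ws i * G_miss n p ?w ?X i) + \<eta> * (\<Sum>i\<in>{1..NN}. ?w i * G_miss n p ?w ?X i)"
      unfolding R_def by (simp add: sum_subtractf algebra_simps)
    ultimately show ?thesis by linarith
  qed
  have "\<eta> * (\<Sum>k<T. R k) = (\<Sum>k<T. \<eta> * R k)" by (simp add: sum_distrib_left)
  also have "\<dots> \<le> (\<Sum>k<T. \<Phi> (Suc k) - \<Phi> k + 8 * \<eta>\<^sup>2 * B\<^sup>2 * lam)"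
    by (rule sum_mono) (use stepk in auto)
  also have "\<dots> = \<Phi> T - \<Phi> 0 + T * (8 * \<eta>\<^sup>2 * B\<^sup>2 * lam)"
    by (simp add: sum.distrib sum_lessThan_telescope)
  also have "\<Phi> T - \<Phi> 0 \<le> lam * ln NN"
  proof -
    have wT: "splx (W xs T)" by (rule iter_splx) (use X in auto)
    have "\<Phi> T - \<Phi> 0 = (\<Sum>i\<in>{1..NN}. ws i * (ln (W xs T i) - ln (lam / NN)))"
      unfolding \<Phi>_def by (simp add: sum_subtractf[symmetric] algebra_simps NN_def)
    also have "\<dots> \<le> (\<Sum>i\<in>{1..NN}. ws i * ln NN)"
    proof (rule sum_mono)
      fix i assume i: "i \<in> {1..NN}"
      have pos: "W xs T i > 0" using wT i unfolding splx_def by auto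
      have "ln (W xs T i) \<le> ln lam" using iter_le_lam[OF wT i] pos by simp
      moreover have "ln (lam / NN) = ln lam - ln NN" using lam_pos NN_ge by (simp add: ln_div)
      ultimately have "ln (W xs T i) - ln (lam / NN) \<le> ln NN" by linarith
      then show "ws i * (ln (W xs T i) - ln (lam / NN)) \<le> ws i * ln NN" using ws0 i by (intro mult_left_mono) auto
    qed
    also have "\<dots> = (\<Sum>i\<in>{1..NN}. ws i) * ln NN" by (simp add: sum_distrib_right)
    also have "\<dots> = lam * ln NN" using wsum by simp
    finally show ?thesis .
  qed
  finally have "\<eta> * (\<Sum>k<T. R k) \<le> lam * ln NN + T * (8 * \<eta>\<^sup>2 * B\<^sup>2 * lam)" by simp
  then have "(\<Sum>k<T. R k) \<le> (lam * ln NN + T * (8 * \<eta>\<^sup>2 * B\<^sup>2 * lam)) / \<eta>"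
    using eta_pos by (simp add: le_divide_eq mult.commute)
  also have "\<dots> = lam * ln NN / \<eta> + 8 * real T * \<eta> * B\<^sup>2 * lam"
    using eta_pos by (simp add: field_simps power2_eq_square)
  finally show ?thesis unfolding R_def .
qed

end


lemma exp_tangent: "exp a * (1 + (b - a)) \<le> exp (b::real)"
proof -
  have "exp a * (1 + (b - a)) \<le> exp a * exp (b - a)"
    by (intro mult_left_mono) auto
  also have "\<dots> = exp b" by (simp add: exp_diff)
  finally show ?thesis .
qed

lemma tangent:
  "Sf n A th + (\<Sum>i\<in>{1..n-1}. mgr n A th i * (th' i - th i)) \<le> Sf n A th'"
proof -
  let ?C = "ising_configs n" and ?mu = "\<lambda>z. pmf (ising_pmf n A) z"
  have "(\<Sum>i\<in>{1..n-1}. mgr n A th i * (th' i - th i))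
      = (\<Sum>z\<in>?C. ?mu z * (exp (- z n * hh n th z) * ((- z n * hh n th' z) - (- z n * hh n th z))))"
  proof -
    have "(\<Sum>i\<in>{1..n-1}. mgr n A th i * (th' i - th i))
        = (\<Sum>i\<in>{1..n-1}. \<Sum>z\<in>?C. ?mu z * exp (- z n * hh n th z) * (- z n) * ((th' i - th i) * z i))"
      unfolding mgr_def sum_distrib_right by (intro sum.cong refl) (simp add: algebra_simps)
    also have "\<dots> = (\<Sum>z\<in>?C. ?mu z * exp (- z n * hh n th z) * (- z n) * (\<Sum>i\<in>{1..n-1}. (th' i - th i) * z i))"
      by (subst sum.swap) (simp add: sum_distrib_left)
    also have "\<dots> = (\<Sum>z\<in>?C. ?mu z * (exp (- z n * hh n th z) * ((- z n * hh n th' z) - (- z n * hh n th z))))"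
    proof (intro sum.cong refl)
      fix z
      have eq: "(\<Sum>i\<in>{1..n-1}. (th' i - th i) * z i) = hh n th' z - hh n th z"
        unfolding hh_def by (simp add: sum_subtractf[symmetric] algebra_simps)
      show "?mu z * exp (- z n * hh n th z) * (- z n) * (\<Sum>i\<in>{1..n-1}. (th' i - th i) * z i)
          = ?mu z * (exp (- z n * hh n th z) * ((- z n * hh n th' z) - (- z n * hh n th z)))"
        unfolding eq by (simp add: algebra_simps)
    qed
    finally show ?thesis .
  qed
  then have "Sf n A th + (\<Sum>i\<in>{1..n-1}. mgr n A th i * (th' i - th i))
      = (\<Sum>z\<in>?C. ?mu z * (exp (- z n * hh n th z) * (1 + ((- z n * hh n th' z) - (- z n * hh n th z)))))"
    unfolding Sf_def by (simp add: sum.distrib[symmetric] algebra_simps)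
  also have "\<dots> \<le> Sf n A th'"
    unfolding Sf_def by (intro sum_mono mult_left_mono exp_tangent) auto
  finally show ?thesis .
qed

lemma Sf_avg:
  assumes T: "T > 0"
  shows "real T * Sf n A (\<lambda>j. (\<Sum>k<T. th k j) / real T) \<le> (\<Sum>k<T. Sf n A (th k))"
proof -
  let ?C = "ising_configs n" and ?mu = "\<lambda>z. pmf (ising_pmf n A) z"
  have pw: "real T * exp (- z n * hh n (\<lambda>j. (\<Sum>k<T. th k j) / real T) z) \<le> (\<Sum>k<T. exp (- z n * hh n (th k) z))" for z
  proof -
    define b where "b = (\<lambda>k. - z n * hh n (th k) z)"
    define bb where "bb = (\<Sum>k<T. b k) / real T"
    have bb_eq: "- z n * hh n (\<lambda>j. (\<Sum>k<T. th k j) / real T) z = bb"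
    proof -
      have "hh n (\<lambda>j. (\<Sum>k<T. th k j) / real T) z = (\<Sum>j\<in>{1..n-1}. \<Sum>k<T. th k j * z j / real T)"
        unfolding hh_def by (simp add: sum_divide_distrib sum_distrib_right)
      also have "\<dots> = (\<Sum>k<T. \<Sum>j\<in>{1..n-1}. th k j * z j / real T)" by (rule sum.swap)
      also have "\<dots> = (\<Sum>k<T. hh n (th k) z) / real T"
        unfolding hh_def by (simp add: sum_divide_distrib)
      finally have "hh n (\<lambda>j. (\<Sum>k<T. th k j) / real T) z = (\<Sum>k<T. hh n (th k) z) / real T" .
      then show ?thesis unfolding bb_def b_def by (simp add: sum_distrib_left sum_divide_distrib)
    qed
    have "(\<Sum>k<T. exp bb * (1 + (b k - bb))) \<le> (\<Sum>k<T. exp (b k))"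
      by (intro sum_mono exp_tangent)
    moreover have "(\<Sum>k<T. exp bb * (1 + (b k - bb))) = real T * exp bb"
    proof -
      have "(\<Sum>k<T. exp bb * (1 + (b k - bb))) = exp bb * (real T + (\<Sum>k<T. b k) - real T * bb)"
        by (simp add: sum_distrib_left[symmetric] sum.distrib sum_subtractf algebra_simps)
      also have "(\<Sum>k<T. b k) = real T * bb" unfolding bb_def using T by simp
      finally show ?thesis by simp
    qed
    ultimately show ?thesis unfolding bb_eq b_def by simp
  qed
  have "real T * Sf n A (\<lambda>j. (\<Sum>k<T. th k j) / real T)
      = (\<Sum>z\<in>?C. ?mu z * (real T * exp (- z n * hh n (\<lambda>j. (\<Sum>k<T. th k j) / real T) z)))"
    unfolding Sf_def by (simp add: sum_distrib_left algebra_simps)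
  also have "\<dots> \<le> (\<Sum>z\<in>?C. ?mu z * (\<Sum>k<T. exp (- z n * hh n (th k) z)))"
    by (intro sum_mono mult_left_mono pw) auto
  also have "\<dots> = (\<Sum>k<T. Sf n A (th k))"
    unfolding Sf_def by (simp add: sum_distrib_left sum.swap[of _ "{..<T}"])
  finally show ?thesis .
qed

lemma mgr_bound:
  assumes "(\<Sum>j\<in>{1..n-1}. \<bar>th j\<bar>) \<le> lam"
  shows "\<bar>mgr n A th i\<bar> \<le> exp lam"
proof -
  let ?C = "ising_configs n" and ?mu = "\<lambda>z. pmf (ising_pmf n A) z"
  have "\<bar>mgr n A th i\<bar> \<le> (\<Sum>z\<in>?C. \<bar>?mu z * (- z n * z i * exp (- z n * hh n th z))\<bar>)"
    unfolding mgr_def by (rule sum_abs)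
  also have "\<dots> \<le> (\<Sum>z\<in>?C. ?mu z * exp lam)"
  proof (rule sum_mono)
    fix z assume z: "z \<in> ?C"
    have zn: "\<bar>z n\<bar> \<le> 1" and zi: "\<bar>z i\<bar> \<le> 1" using config_abs[OF z] by auto
    have "\<bar>- z n * hh n th z\<bar> \<le> \<bar>hh n th z\<bar>" using zn by (simp add: abs_mult mult_left_le_one_le)
    also have "\<dots> \<le> lam" using hh_abs[OF z, of th] assms by linarith
    finally have e: "exp (- z n * hh n th z) \<le> exp lam" by simp
    have "\<bar>z n * z i\<bar> \<le> 1" using zn zi by (simp add: abs_mult mult_le_one)
    then have "\<bar>z n * z i\<bar> * exp (- z n * hh n th z) \<le> 1 * exp lam"
      using e by (intro mult_mono) auto
    then have "\<bar>- z n * z i * exp (- z n * hh n th z)\<bar> \<le> 1 * exp lam"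
      by (simp add: abs_mult)
    then show "\<bar>?mu z * (- z n * z i * exp (- z n * hh n th z))\<bar> \<le> ?mu z * exp lam"
      by (simp add: abs_mult mult_left_mono)
  qed
  also have "\<dots> = exp lam" by (simp add: sum_distrib_right[symmetric] sum_pmf_ising)
  finally show ?thesis .
qed

lemma finite_set_miss: "finite (set_pmf (miss_pmf n A p))"
proof -
  have "set_pmf (miss_pmf n A p) \<subseteq> (\<Union>z\<in>ising_configs n. mask z ` set_pmf (Pi_pmf {1..n} False (\<lambda>i. bernoulli_pmf (1 - p i))))"
    unfolding miss_pmf_alt using set_pmf_ising by auto
  moreover have "finite (\<Union>z\<in>ising_configs n. mask z ` set_pmf (Pi_pmf {1..n} False (\<lambda>i. bernoulli_pmf (1 - p i))))"
    by (intro finite_UN_I finite_configs finite_imageI finite_set_Pi_bool) auto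
  ultimately show ?thesis by (rule finite_subset)
qed


lemma final_arith:
  fixes T lam B L \<epsilon> d :: real
  assumes T: "T > 0" and lam: "lam > 0" and B: "B > 0" and L: "L > 0" and e: "\<epsilon> > 0"
    and Tb: "T \<ge> 3600 / \<epsilon>^4 * B\<^sup>2 * exp (10 * lam) * L"
    and main: "T * (exp (- 3 * lam) / (2 * (1 + 2 * lam))) * d\<^sup>2 \<le> 15 * lam * B * sqrt (T * L)"
  shows "d\<^sup>2 \<le> \<epsilon>\<^sup>2"
proof (rule ccontr)
  assume "\<not> d\<^sup>2 \<le> \<epsilon>\<^sup>2"
  then have dg: "\<epsilon>\<^sup>2 < d\<^sup>2" by simp
  define c0 where "c0 = exp (- 3 * lam) / (2 * (1 + 2 * lam))"
  have c0: "c0 > 0" unfolding c0_def using lam by simp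
  define X where "X = T * c0 * \<epsilon>\<^sup>2"
  define Y where "Y = 15 * lam * B * sqrt (T * L)"
  have X0: "X \<ge> 0" unfolding X_def using T c0 by simp
  have "X < T * c0 * d\<^sup>2" unfolding X_def using dg T c0 by simp
  also have "\<dots> \<le> Y" using main unfolding Y_def c0_def .
  finally have XY: "X < Y" .
  then have "X\<^sup>2 < Y\<^sup>2" using X0 by (intro power_strict_mono) auto
  also have "Y\<^sup>2 = 225 * lam\<^sup>2 * B\<^sup>2 * (T * L)"
    unfolding Y_def using T L by (simp add: power_mult_distrib)
  finally have XY2: "X\<^sup>2 < 225 * lam\<^sup>2 * B\<^sup>2 * (T * L)" .
  have Te: "T * \<epsilon>^4 \<ge> 3600 * B\<^sup>2 * exp (10 * lam) * L"
  proof -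
    have "3600 / \<epsilon>^4 * B\<^sup>2 * exp (10 * lam) * L * \<epsilon>^4 \<le> T * \<epsilon>^4"
      using Tb e by (intro mult_right_mono) auto
    then show ?thesis using e by simp
  qed
  have "X\<^sup>2 = T * c0\<^sup>2 * (T * \<epsilon>^4)" unfolding X_def by (simp add: power2_eq_square power4_eq_xxxx)
  also have "\<dots> \<ge> T * c0\<^sup>2 * (3600 * B\<^sup>2 * exp (10 * lam) * L)"
    using Te T c0 by (intro mult_left_mono) auto
  finally have "T * c0\<^sup>2 * (3600 * B\<^sup>2 * exp (10 * lam) * L) < 225 * lam\<^sup>2 * B\<^sup>2 * (T * L)"
    using XY2 by linarith
  then have "(T * B\<^sup>2 * L) * (3600 * c0\<^sup>2 * exp (10 * lam)) < (T * B\<^sup>2 * L) * (225 * lam\<^sup>2)"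
    by (simp add: algebra_simps)
  then have lt: "3600 * c0\<^sup>2 * exp (10 * lam) < 225 * lam\<^sup>2"
    using T B L by (subst (asm) mult_less_cancel_left_pos) auto
  have "c0\<^sup>2 * exp (10 * lam) = exp (4 * lam) / (4 * (1 + 2 * lam)\<^sup>2)"
  proof -
    have "(exp (- 3 * lam))^2 * exp (10 * lam) = exp (4 * lam)"
      by (simp add: power2_eq_square exp_add[symmetric])
    then show ?thesis unfolding c0_def by (simp add: power_divide power_mult_distrib power2_eq_square algebra_simps)
  qed
  with lt have "3600 * (exp (4 * lam) / (4 * (1 + 2 * lam)\<^sup>2)) < 225 * lam\<^sup>2"
    by (simp add: mult.assoc)
  then have "4 * exp (4 * lam) < lam\<^sup>2 * (1 + 2 * lam)\<^sup>2"
    using lam by (simp add: field_simps)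
  moreover have "lam\<^sup>2 * (1 + 2 * lam)\<^sup>2 \<le> 4 * exp (4 * lam)"
  proof -
    have "lam * (1 + 2 * lam) \<le> 2 * exp (2 * lam)" by (rule lam_poly_bound) (use lam in auto)
    then have "(lam * (1 + 2 * lam))\<^sup>2 \<le> (2 * exp (2 * lam))\<^sup>2" using lam by (intro power_mono) auto
    also have "(2 * exp (2 * lam))\<^sup>2 = 4 * exp (4 * lam)" by (simp add: power2_eq_square exp_add[symmetric])
    finally show ?thesis by (simp add: power_mult_distrib)
  qed
  ultimately show False by linarith
qed

lemma ws_props:
  fixes A :: "nat \<Rightarrow> nat \<Rightarrow> real"
  assumes n: "n \<ge> 2" and rsum: "(\<Sum>j\<in>{1..n-1}. \<bar>A n j\<bar>) \<le> lam"
  defines "ws \<equiv> (\<lambda>k. if 1 \<le> k \<and> k \<le> n - 1 then max (A n k) 0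
      else if n \<le> k \<and> k \<le> 2 * n - 2 then max (- A n (k - (n - 1))) 0
      else lam - (\<Sum>j\<in>{1..n-1}. \<bar>A n j\<bar>))"
  shows "\<forall>i\<in>{1..2*n-1}. ws i \<ge> 0" "(\<Sum>i\<in>{1..2*n-1}. ws i) = lam"
    "\<And>i. i \<in> {1..n-1} \<Longrightarrow> ws i - ws (n - 1 + i) = A n i"
proof -
  have hi: "ws (n - 1 + j) = max (- A n j) 0" if j: "j \<in> {1..n-1}" for j
  proof -
    have a: "\<not> (1 \<le> n - 1 + j \<and> n - 1 + j \<le> n - 1)" "n \<le> n - 1 + j \<and> n - 1 + j \<le> 2 * n - 2"
      "n - 1 + j - (n - 1) = j" using n j by auto
    show ?thesis unfolding ws_def using a by presburger
  qed
  have lo: "ws j = max (A n j) 0" if j: "j \<in> {1..n-1}" for j using j unfolding ws_def by auto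
  have last: "ws (2*n-1) = lam - (\<Sum>j\<in>{1..n-1}. \<bar>A n j\<bar>)"
  proof -
    have a: "\<not> (1 \<le> 2*n-1 \<and> 2*n-1 \<le> n - 1)" "\<not> (n \<le> 2*n-1 \<and> 2*n-1 \<le> 2 * n - 2)"
      using n by auto
    show ?thesis unfolding ws_def using a by presburger
  qed
  show "\<forall>i\<in>{1..2*n-1}. ws i \<ge> 0"
    unfolding ws_def using rsum by auto
  show "(\<Sum>i\<in>{1..2*n-1}. ws i) = lam"
  proof -
    have "(\<Sum>i\<in>{1..2*n-1}. ws i) = (\<Sum>j\<in>{1..n-1}. ws j + ws (n - 1 + j)) + ws (2*n-1)"
      by (rule split_sum_2n[OF n])
    also have "(\<Sum>j\<in>{1..n-1}. ws j + ws (n - 1 + j)) = (\<Sum>j\<in>{1..n-1}. \<bar>A n j\<bar>)"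
    proof (intro sum.cong refl)
      fix j assume j: "j \<in> {1..n-1}"
      show "ws j + ws (n - 1 + j) = \<bar>A n j\<bar>" unfolding lo[OF j] hi[OF j] by auto
    qed
    finally show ?thesis unfolding last by simp
  qed
  show "\<And>i. i \<in> {1..n-1} \<Longrightarrow> ws i - ws (n - 1 + i) = A n i"
    using lo hi by auto
qed

theorem mainTheorem6:
  "\<exists>K::real. K > 0 \<and>
    (\<forall>(n::nat) (A::nat \<Rightarrow> nat \<Rightarrow> real) (lam::real) (p::nat \<Rightarrow> real) (\<epsilon>::real) (\<delta>::real) (T::nat).
      n \<ge> 2 \<longrightarrow>
      (\<forall>i\<in>{1..n}. \<forall>j\<in>{1..n}. A i j = A j i) \<longrightarrow>
      (\<forall>i\<in>{1..n}. A i i = 0) \<longrightarrow>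
      lam > 0 \<longrightarrow>
      (\<forall>i\<in>{1..n}. (\<Sum>j\<in>{1..n}. \<bar>A i j\<bar>) \<le> lam) \<longrightarrow>
      (\<forall>i\<in>{1..n}. 0 \<le> p i \<and> p i < 1) \<longrightarrow>
      \<epsilon> > 0 \<longrightarrow> 0 < \<delta> \<longrightarrow> \<delta> < 1 \<longrightarrow>
      (let pmax = Max (p ` {1..n}) in
        real T \<ge> 16 * ln (real (2 * n - 1)) \<longrightarrow>
        real T \<ge> K * \<epsilon> powi (-4) * (1 - pmax) powi (-4)
                  * exp ((2 / (1 - pmax) + 10) * lam) * ln (real n / \<delta>) \<longrightarrow>
        (let eta = (1 - pmax)^2 / 2 * exp (- lam / (1 - pmax)) * sqrt (ln (real (2 * n - 1)) / real T) in
          measure_pmf.prob (miss_samples n A p T)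
            {xs. \<forall>i\<in>{1..n-1}. \<bar>smg_output n p lam eta T xs i - smg_output n p lam eta T xs (n - 1 + i) - A n i\<bar> \<le> \<epsilon>}
          \<ge> 1 - \<delta>)))"
proof (intro exI[of _ 3600] conjI allI impI)
  show "(3600::real) > 0" by simp
  fix n :: nat and A :: "nat \<Rightarrow> nat \<Rightarrow> real" and lam :: real and p :: "nat \<Rightarrow> real"
    and \<epsilon> \<delta> :: real and T :: nat
  assume n2: "n \<ge> 2" and sym: "\<forall>i\<in>{1..n}. \<forall>j\<in>{1..n}. A i j = A j i"
    and diag: "\<forall>i\<in>{1..n}. A i i = 0" and lam: "lam > 0"
    and rows: "\<forall>i\<in>{1..n}. (\<Sum>j\<in>{1..n}. \<bar>A i j\<bar>) \<le> lam"
    and pb: "\<forall>i\<in>{1..n}. 0 \<le> p i \<and> p i < 1"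
    and eps: "\<epsilon> > 0" and d0: "0 < \<delta>" and d1: "\<delta> < 1"
  define pm where "pm = Max (p ` {1..n})"
  define q where "q = 1 - pm"
  define lnN where "lnN = ln (real (2 * n - 1))"
  define L where "L = ln (real n / \<delta>)"
  define B where "B = exp (lam / q) / q\<^sup>2"
  show "let pmax = Max (p ` {1..n}) in
        real T \<ge> 16 * ln (real (2 * n - 1)) \<longrightarrow>
        real T \<ge> 3600 * \<epsilon> powi (-4) * (1 - pmax) powi (-4)
                  * exp ((2 / (1 - pmax) + 10) * lam) * ln (real n / \<delta>) \<longrightarrow>
        (let eta = (1 - pmax)^2 / 2 * exp (- lam / (1 - pmax)) * sqrt (ln (real (2 * n - 1)) / real T) in
          measure_pmf.prob (miss_samples n A p T)
            {xs. \<forall>i\<in>{1..n-1}. \<bar>smg_output n p lam eta T xs i - smg_output n p lam eta T xs (n - 1 + i) - A n i\<bar> \<le> \<epsilon>}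
          \<ge> 1 - \<delta>)"
    unfolding Let_def pm_def[symmetric] q_def[symmetric] lnN_def[symmetric] L_def[symmetric]
  proof (intro impI)
    assume T1: "16 * lnN \<le> real T"
    assume T2: "3600 * \<epsilon> powi - 4 * q powi - 4 * exp ((2 / q + 10) * lam) * L \<le> real T"
    define \<eta> where "\<eta> = q\<^sup>2 / 2 * exp (- lam / q) * sqrt (lnN / real T)"
    have fin: "finite (p ` {1..n})" "p ` {1..n} \<noteq> {}" using n2 by auto
    have p_le: "p i \<le> pm" if "i \<in> {1..n}" for i unfolding pm_def using fin that by (intro Max_ge) auto
    have pm_lt: "pm < 1"
    proof -
      have "pm \<in> p ` {1..n}" unfolding pm_def using fin by (rule Max_in)
      then show ?thesis using pb by auto
    qed
    have one: "1 \<in> {1..n}" using n2 by auto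
    have "0 \<le> p 1" using pb one by blast
    then have pm0: "pm \<ge> 0" using p_le[OF one] by linarith
    have q0: "q > 0" unfolding q_def using pm_lt by simp
    have q1: "q \<le> 1" unfolding q_def using pm0 by simp
    have qp: "\<forall>i\<in>{1..n}. q \<le> 1 - p i" unfolding q_def using p_le by auto
    have B0: "B > 0" unfolding B_def using q0 by simp
    have n_ge: "real n \<ge> 2" using n2 by simp
    have L0: "L > 0"
    proof -
      have "real n / \<delta> > 1" using n_ge d0 d1 by (simp add: field_simps)
      then show ?thesis unfolding L_def by simp
    qed
    have lnN0: "lnN > 0" unfolding lnN_def using n2 by simp
    have T0: "real T > 0"
    proof -
      have "3600 * \<epsilon> powi - 4 * q powi - 4 * exp ((2 / q + 10) * lam) * L > 0"
        using eps q0 L0 by (simp add: power_int_minus)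
      then show ?thesis using T2 by linarith
    qed
    have Tpos: "T > 0" using T0 by simp
    define s where "s = sqrt (lnN / real T)"
    have s0: "s > 0" unfolding s_def using lnN0 T0 by simp
    have s2: "s\<^sup>2 = lnN / real T" unfolding s_def using lnN0 T0 by simp
    have eta_s: "\<eta> = s / (2 * B)"
      unfolding \<eta>_def s_def B_def using q0 by (simp add: exp_minus field_simps)
    have eta0: "\<eta> > 0" using eta_s s0 B0 by simp
    have s_le: "s \<le> 1/4"
    proof -
      have "lnN / real T \<le> 1/16" using T1 T0 by (simp add: divide_le_eq)
      then have "s \<le> sqrt (1/16)" unfolding s_def by simp
      also have "sqrt (1/16) = (1/4::real)" by (simp add: real_sqrt_divide)
      finally show ?thesis .
    qed
    have eta_small: "\<eta> * (2 * (exp (lam / q) / q\<^sup>2)) \<le> 1/4"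
      using eta_s B0 s_le unfolding B_def[symmetric] by simp
    interpret al: algo n p lam \<eta> q
      by unfold_locales (use n2 pb q0 qp lam eta0 eta_small in auto)
    have alB: "al.B = B" unfolding al.B_def B_def ..
    have alNN: "al.NN = 2 * n - 1" unfolding al.NN_def ..
    define W where "W = (\<lambda>xs k. smg_iterate n p lam \<eta> xs k)"
    define th where "th = (\<lambda>xs k j. W xs k j - W xs k (n - 1 + j))"
    define M where "M = miss_pmf n A p"
    define D where "D = (\<lambda>k xs. \<Sum>i\<in>{1..n-1}. (th xs k i - A n i) * (mgr n A (th xs k) i - g_miss n p (W xs k) (xs (Suc k)) i))"
    define c where "c = 4 * lam * B"
    define a where "a = c * sqrt (2 * real T * ln (1 / \<delta>))"
    have nN: "n \<in> {1..n}" using n2 by auto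
    have rowsn: "(\<Sum>j\<in>{1..n-1}. \<bar>A n j\<bar>) \<le> lam"
    proof -
      have "(\<Sum>j\<in>{1..n-1}. \<bar>A n j\<bar>) \<le> (\<Sum>j\<in>{1..n}. \<bar>A n j\<bar>)" by (rule sum_mono2) auto
      then show ?thesis using rows nN by force
    qed
    have expB: "exp lam \<le> B"
    proof -
      have "lam \<le> lam / q" using lam q0 q1 by (simp add: le_divide_eq mult_left_le)
      then have "exp lam \<le> exp (lam / q)" by simp
      also have "exp (lam / q) \<le> exp (lam / q) / q\<^sup>2"
        using q0 q1 by (simp add: le_divide_eq power_le_one mult_left_le)
      finally show ?thesis unfolding B_def .
    qed
    have c0: "c > 0" unfolding c_def using lam B0 by simp
    have finM: "finite (set_pmf M)" unfolding M_def by (rule finite_set_miss)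
    have MX: "\<bar>X j\<bar> \<le> 1" if "X \<in> set_pmf M" for X j using that unfolding M_def by (rule set_pmf_miss)
    have thvs: "(\<Sum>j\<in>{1..n-1}. \<bar>th xs k j\<bar>) \<le> lam" if "al.splx (W xs k)" for xs k
      using al.splx_vs[OF that] unfolding th_def .
    have azu: "azuma_setup M D T c"
    proof (rule azuma_setup.intro)
      show "0 \<le> c" using c0 by simp
    next
      fix k :: nat and xs ys :: "nat \<Rightarrow> nat \<Rightarrow> real" assume k: "k < T" and eq: "\<And>j. j \<in> {1..Suc k} \<Longrightarrow> xs j = ys j"
      have "W xs k = W ys k" unfolding W_def by (rule al.iter_dep) (use eq in auto)
      moreover have "xs (Suc k) = ys (Suc k)" using eq by auto
      ultimately show "D k xs = D k ys" unfolding D_def th_def by simp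
    next
      fix k :: nat and xs :: "nat \<Rightarrow> nat \<Rightarrow> real" assume k: "k < T" and inM: "\<And>j. j \<in> {1..Suc k} \<Longrightarrow> xs j \<in> set_pmf M"
      have wk: "al.splx (W xs k)" unfolding W_def by (rule al.iter_splx) (use inM MX in force)
      have Xk: "\<bar>xs (Suc k) j\<bar> \<le> 1" for j using inM[of "Suc k"] MX by auto
      have "\<bar>D k xs\<bar> \<le> (\<Sum>i\<in>{1..n-1}. \<bar>th xs k i - A n i\<bar> * (2 * B))"
        unfolding D_def
      proof (rule order_trans[OF sum_abs], rule sum_mono)
        fix i assume i: "i \<in> {1..n-1}"
        have m: "\<bar>mgr n A (th xs k) i\<bar> \<le> B" using mgr_bound[OF thvs[OF wk]] expB by (rule order_trans)
        have g: "\<bar>g_miss n p (W xs k) (xs (Suc k)) i\<bar> \<le> B"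
          using al.g_bound[OF al.splx_vs[OF wk] Xk i] unfolding alB .
        have "\<bar>mgr n A (th xs k) i - g_miss n p (W xs k) (xs (Suc k)) i\<bar> \<le> 2 * B" using m g by linarith
        then show "\<bar>(th xs k i - A n i) * (mgr n A (th xs k) i - g_miss n p (W xs k) (xs (Suc k)) i)\<bar>
            \<le> \<bar>th xs k i - A n i\<bar> * (2 * B)" by (simp add: abs_mult mult_left_mono)
      qed
      also have "\<dots> = (\<Sum>i\<in>{1..n-1}. \<bar>th xs k i - A n i\<bar>) * (2 * B)" by (simp add: sum_distrib_right)
      also have "\<dots> \<le> (2 * lam) * (2 * B)"
      proof (rule mult_right_mono)
        have "(\<Sum>i\<in>{1..n-1}. \<bar>th xs k i - A n i\<bar>) \<le> (\<Sum>i\<in>{1..n-1}. \<bar>th xs k i\<bar> + \<bar>A n i\<bar>)"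
          by (intro sum_mono) auto
        also have "\<dots> \<le> 2 * lam" using thvs[OF wk] rowsn by (simp add: sum.distrib)
        finally show "(\<Sum>i\<in>{1..n-1}. \<bar>th xs k i - A n i\<bar>) \<le> 2 * lam" .
      qed (use B0 in auto)
      finally show "\<bar>D k xs\<bar> \<le> c" unfolding c_def by simp
    next
      fix k :: nat and xs :: "nat \<Rightarrow> nat \<Rightarrow> real" assume k: "k < T" and inM: "\<And>j. j \<in> {1..k} \<Longrightarrow> xs j \<in> set_pmf M"
      have Wy: "W (xs(Suc k := y)) k = W xs k" for y unfolding W_def by (rule al.iter_dep) auto
      have "measure_pmf.expectation M (\<lambda>y. D k (xs(Suc k := y)))
          = measure_pmf.expectation M (\<lambda>y. \<Sum>i\<in>{1..n-1}. (th xs k i - A n i) * (mgr n A (th xs k) i - g_miss n p (W xs k) y i))"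
        unfolding D_def th_def Wy by simp
      also have "\<dots> = (\<Sum>i\<in>{1..n-1}. measure_pmf.expectation M (\<lambda>y. (th xs k i - A n i) * (mgr n A (th xs k) i - g_miss n p (W xs k) y i)))"
        by (rule Bochner_Integration.integral_sum) (auto intro: integrable_measure_pmf_finite[OF finM])
      also have "\<dots> = (\<Sum>i\<in>{1..n-1}. (th xs k i - A n i) * (mgr n A (th xs k) i - measure_pmf.expectation M (\<lambda>y. g_miss n p (W xs k) y i)))"
      proof (intro sum.cong refl)
        fix i assume i: "i \<in> {1..n-1}"
        have int: "integrable (measure_pmf M) f" for f :: "_ \<Rightarrow> real" by (rule integrable_measure_pmf_finite[OF finM])
        show "measure_pmf.expectation M (\<lambda>y. (th xs k i - A n i) * (mgr n A (th xs k) i - g_miss n p (W xs k) y i))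
          = (th xs k i - A n i) * (mgr n A (th xs k) i - measure_pmf.expectation M (\<lambda>y. g_miss n p (W xs k) y i))"
          by (simp add: Bochner_Integration.integral_diff[OF int int] measure_pmf.prob_space)
      qed
      also have "\<dots> = 0"
      proof (intro sum.neutral ballI)
        fix i assume i: "i \<in> {1..n-1}"
        have "measure_pmf.expectation M (\<lambda>y. g_miss n p (W xs k) y i) = mgr n A (th xs k) i"
          unfolding M_def th_def by (rule unbiased[OF n2 pb i])
        then show "(th xs k i - A n i) * (mgr n A (th xs k) i - measure_pmf.expectation M (\<lambda>y. g_miss n p (W xs k) y i)) = 0"
          by simp
      qed
      finally show "measure_pmf.expectation M (\<lambda>y. D k (xs(Suc k := y))) = 0" .
    qed
    let ?P = "miss_samples n A p T"
    define Bd where "Bd = {xs. a \<le> (\<Sum>k<T. D k xs)}"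
    define G where "G = {xs. \<forall>i\<in>{1..n-1}. \<bar>smg_output n p lam \<eta> T xs i - smg_output n p lam \<eta> T xs (n - 1 + i) - A n i\<bar> \<le> \<epsilon>}"
    have lnd: "ln (1 / \<delta>) > 0" using d0 d1 by simp
    have a0: "a > 0" unfolding a_def using c0 T0 lnd by simp
    have bad: "measure_pmf.prob ?P Bd \<le> \<delta>"
    proof -
      have "measure_pmf.prob ?P Bd \<le> exp (- (a\<^sup>2) / (2 * real T * c\<^sup>2))"
        unfolding Bd_def miss_samples_def M_def[symmetric]
        by (rule azuma_setup.azuma[OF azu a0 c0 Tpos])
      also have "- (a\<^sup>2) / (2 * real T * c\<^sup>2) = ln \<delta>"
      proof -
        have "a\<^sup>2 = c\<^sup>2 * (2 * real T * ln (1 / \<delta>))"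
          unfolding a_def using T0 lnd by (simp add: power_mult_distrib)
        then show ?thesis using c0 T0 d0 by (simp add: ln_div)
      qed
      also have "exp (ln \<delta>) = \<delta>" using d0 by simp
      finally show ?thesis .
    qed
    have good: "xs \<in> G" if xsP: "xs \<in> set_pmf ?P" and nb: "xs \<notin> Bd" for xs
    proof -
      have Xall: "\<bar>xs t j\<bar> \<le> 1" for t j
      proof (cases "t \<in> {1..T}")
        case True
        then have "xs t \<in> set_pmf M" using xsP unfolding miss_samples_def M_def
          by (auto simp: set_Pi_pmf PiE_dflt_def)
        then show ?thesis by (rule MX)
      next
        case False
        then have "xs t = (\<lambda>_. 0)" using xsP unfolding miss_samples_def
          by (auto simp: set_Pi_pmf PiE_dflt_def)
        then show ?thesis by simp
      qed
      have wk: "al.splx (W xs k)" for k unfolding W_def by (rule al.iter_splx) (use Xall in auto)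
      define ws where "ws \<equiv> (\<lambda>k. if 1 \<le> k \<and> k \<le> n - 1 then max (A n k) 0
          else if n \<le> k \<and> k \<le> 2 * n - 2 then max (- A n (k - (n - 1))) 0
          else lam - (\<Sum>j\<in>{1..n-1}. \<bar>A n j\<bar>))"
      have wsp: "\<forall>i\<in>{1..2*n-1}. ws i \<ge> 0" "(\<Sum>i\<in>{1..2*n-1}. ws i) = lam"
        "\<And>i. i \<in> {1..n-1} \<Longrightarrow> ws i - ws (n - 1 + i) = A n i"
        using ws_props[of n A lam, OF n2 rowsn] unfolding ws_def by auto
      have reg: "(\<Sum>k<T. \<Sum>i\<in>{1..n-1}. (th xs k i - A n i) * g_miss n p (W xs k) (xs (Suc k)) i)
          \<le> 6 * lam * B * (real T * s)"
      proof -
        have eq: "(\<Sum>i\<in>{1..al.NN}. (W xs k i - ws i) * G_miss n p (W xs k) (xs (Suc k)) i)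
            = (\<Sum>i\<in>{1..n-1}. (th xs k i - A n i) * g_miss n p (W xs k) (xs (Suc k)) i)" for k
        proof -
          have "(\<Sum>i\<in>{1..al.NN}. (W xs k i - ws i) * G_miss n p (W xs k) (xs (Suc k)) i)
              = (\<Sum>i\<in>{1..n-1}. ((W xs k i - ws i) - (W xs k (n - 1 + i) - ws (n - 1 + i))) * g_miss n p (W xs k) (xs (Suc k)) i)"
            unfolding alNN by (rule dot_G[OF n2])
          also have "\<dots> = (\<Sum>i\<in>{1..n-1}. (th xs k i - A n i) * g_miss n p (W xs k) (xs (Suc k)) i)"
          proof (intro sum.cong refl)
            fix i assume i: "i \<in> {1..n-1}"
            show "((W xs k i - ws i) - (W xs k (n - 1 + i) - ws (n - 1 + i))) * g_miss n p (W xs k) (xs (Suc k)) i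
                = (th xs k i - A n i) * g_miss n p (W xs k) (xs (Suc k)) i"
              using wsp(3)[OF i] unfolding th_def by (simp add: algebra_simps)
          qed
          finally show ?thesis .
        qed
        have "(\<Sum>k<T. \<Sum>i\<in>{1..al.NN}. (W xs k i - ws i) * G_miss n p (W xs k) (xs (Suc k)) i)
            \<le> lam * ln al.NN / \<eta> + 8 * real T * \<eta> * al.B\<^sup>2 * lam"
          unfolding W_def by (rule al.regret) (use Xall wsp in \<open>auto simp: alNN\<close>)
        also have "lam * ln al.NN / \<eta> + 8 * real T * \<eta> * al.B\<^sup>2 * lam = 6 * lam * B * (real T * s)"
        proof -
          have "ln (real al.NN) = lnN" unfolding alNN lnN_def by simp
          moreover have "lnN = real T * s\<^sup>2" using s2 T0 by simp
          ultimately show ?thesis unfolding alB eta_s using s0 B0 by (simp add: field_simps power2_eq_square)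
        qed
        finally show ?thesis unfolding eq .
      qed
      define An where "An = (\<lambda>j. A n j)"
      have tan: "Sf n A (th xs k) - Sf n A An \<le> (\<Sum>i\<in>{1..n-1}. (th xs k i - A n i) * mgr n A (th xs k) i)" for k
      proof -
        have "Sf n A (th xs k) + (\<Sum>i\<in>{1..n-1}. mgr n A (th xs k) i * (An i - th xs k i)) \<le> Sf n A An"
          by (rule tangent)
        moreover have "(\<Sum>i\<in>{1..n-1}. mgr n A (th xs k) i * (An i - th xs k i))
            = - (\<Sum>i\<in>{1..n-1}. (th xs k i - A n i) * mgr n A (th xs k) i)"
          unfolding An_def by (simp add: sum_negf[symmetric] algebra_simps)
        ultimately show ?thesis by linarith
      qed
      have sumS: "(\<Sum>k<T. Sf n A (th xs k)) - real T * Sf n A An \<le> a + 6 * lam * B * (real T * s)"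
      proof -
        have "(\<Sum>k<T. Sf n A (th xs k)) - real T * Sf n A An = (\<Sum>k<T. Sf n A (th xs k) - Sf n A An)"
          by (simp add: sum_subtractf)
        also have "\<dots> \<le> (\<Sum>k<T. \<Sum>i\<in>{1..n-1}. (th xs k i - A n i) * mgr n A (th xs k) i)"
          by (rule sum_mono) (rule tan)
        also have "\<dots> = (\<Sum>k<T. D k xs) + (\<Sum>k<T. \<Sum>i\<in>{1..n-1}. (th xs k i - A n i) * g_miss n p (W xs k) (xs (Suc k)) i)"
          unfolding D_def by (simp add: sum.distrib[symmetric] algebra_simps)
        also have "\<dots> \<le> a + 6 * lam * B * (real T * s)"
          using nb reg unfolding Bd_def by simp
        finally show ?thesis .
      qed
      define wb where "wb = smg_output n p lam \<eta> T xs"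
      define thb where "thb = (\<lambda>j. (\<Sum>k<T. th xs k j) / real T)"
      have thb_eq: "thb j = wb j - wb (n - 1 + j)" for j
        unfolding thb_def wb_def smg_output_def th_def W_def by (simp add: sum_subtractf diff_divide_distrib)
      have wb0: "\<forall>i\<in>{1..2*n-1}. wb i \<ge> 0"
      proof
        fix i assume i: "i \<in> {1..2*n-1}"
        have "\<forall>k. W xs k i > 0" using wk i unfolding al.splx_def alNN by auto
        then have "(\<Sum>k<T. W xs k i) \<ge> 0" by (intro sum_nonneg) (auto intro: less_imp_le)
        then show "wb i \<ge> 0" unfolding wb_def smg_output_def W_def using T0 by simp
      qed
      have wbsum: "(\<Sum>i\<in>{1..2*n-1}. wb i) = lam"
      proof -
        have "(\<Sum>i\<in>{1..2*n-1}. wb i) = (\<Sum>i\<in>{1..2*n-1}. \<Sum>k<T. W xs k i / real T)"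
          unfolding wb_def smg_output_def W_def by (simp add: sum_divide_distrib)
        also have "\<dots> = (\<Sum>k<T. \<Sum>i\<in>{1..2*n-1}. W xs k i / real T)" by (rule sum.swap)
        also have "\<dots> = (\<Sum>k<T. \<Sum>i\<in>{1..2*n-1}. W xs k i) / real T" by (simp add: sum_divide_distrib)
        also have "\<dots> = (\<Sum>k<T. lam) / real T"
          using wk unfolding al.splx_def alNN by simp
        finally show ?thesis using T0 by simp
      qed
      have thb_vs: "(\<Sum>j\<in>{1..n-1}. \<bar>thb j\<bar>) \<le> lam"
        using vsum_le[OF n2 wb0] wbsum unfolding thb_eq by simp
      have jens: "real T * Sf n A thb \<le> (\<Sum>k<T. Sf n A (th xs k))"
        unfolding thb_def by (rule Sf_avg[OF Tpos])
      have sq2: "sqrt 2 \<le> (3/2::real)"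
        by (rule real_le_lsqrt) (auto simp: power2_eq_square)
      have TL0: "real T * L \<ge> 0" using T0 L0 by simp
      have Lb1: "ln (1 / \<delta>) \<le> L"
      proof -
        have h: "1 / \<delta> \<le> real n / \<delta>" using n_ge d0 by (simp add: divide_right_mono)
        have "ln (1 / \<delta>) \<le> ln (real n / \<delta>)"
          by (subst ln_le_cancel_iff) (use h d0 n_ge in auto)
        then show ?thesis unfolding L_def .
      qed
      have lnL: "lnN \<le> 2 * L"
      proof -
        have "2 * n \<le> n * n" using n2 by (intro mult_le_mono1)
        then have "2 * n - 1 \<le> n * n" by linarith
        then have "real (2 * n - 1) \<le> real n ^ 2" by (metis of_nat_le_iff of_nat_mult power2_eq_square)
        then have "lnN \<le> ln (real n ^ 2)" unfolding lnN_def using n2 by simp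
        also have "\<dots> = 2 * ln (real n)" using n2 by (simp add: ln_realpow)
        also have "ln (real n) \<le> L"
        proof -
          have h: "real n \<le> real n / \<delta>" using n_ge d0 d1 by (simp add: le_divide_eq)
          have "ln (real n) \<le> ln (real n / \<delta>)"
            by (subst ln_le_cancel_iff) (use h d0 n_ge in auto)
          then show ?thesis unfolding L_def .
        qed
        finally show ?thesis by simp
      qed
      have b1: "sqrt (2 * real T * ln (1 / \<delta>)) \<le> sqrt 2 * sqrt (real T * L)"
      proof -
        have "sqrt (2 * real T * ln (1 / \<delta>)) \<le> sqrt (2 * (real T * L))"
          using Lb1 T0 by (intro real_sqrt_le_mono) (simp add: mult_left_mono)
        then show ?thesis by (simp add: real_sqrt_mult)
      qed
      have b2: "real T * s \<le> sqrt 2 * sqrt (real T * L)"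
      proof (rule power2_le_imp_le)
        have lnNs: "real T * s\<^sup>2 = lnN" using s2 T0 by (simp add: field_simps)
        have "(real T * s)\<^sup>2 = real T * (real T * s\<^sup>2)" by (simp add: power2_eq_square algebra_simps)
        also have "\<dots> = real T * lnN" unfolding lnNs ..
        also have "\<dots> \<le> real T * (2 * L)" using lnL T0 by (intro mult_left_mono) auto
        also have "\<dots> = (sqrt 2 * sqrt (real T * L))\<^sup>2" using TL0 by (simp add: power_mult_distrib)
        finally show "(real T * s)\<^sup>2 \<le> (sqrt 2 * sqrt (real T * L))\<^sup>2" .
      qed (use TL0 in simp)
      have Qb: "a + 6 * lam * B * (real T * s) \<le> 15 * lam * B * sqrt (real T * L)"
      proof -
        have lB: "lam * B > 0" using lam B0 by simp
        have "a \<le> c * (sqrt 2 * sqrt (real T * L))" unfolding a_def using b1 c0 by (intro mult_left_mono) auto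
        moreover have "6 * lam * B * (real T * s) \<le> 6 * lam * B * (sqrt 2 * sqrt (real T * L))"
          using b2 lam B0 by (intro mult_left_mono) auto
        ultimately have "a + 6 * lam * B * (real T * s) \<le> 10 * (lam * B) * sqrt 2 * sqrt (real T * L)"
          unfolding c_def by (simp add: algebra_simps)
        also have "\<dots> \<le> 10 * (lam * B) * (3/2) * sqrt (real T * L)"
          using sq2 lB TL0 by (intro mult_right_mono mult_left_mono) auto
        also have "\<dots> = 15 * lam * B * sqrt (real T * L)" by simp
        finally show ?thesis .
      qed
      have Tb: "real T \<ge> 3600 / \<epsilon>^4 * B\<^sup>2 * exp (10 * lam) * L"
      proof -
        have "3600 * \<epsilon> powi - 4 * q powi - 4 * exp ((2 / q + 10) * lam) * L = 3600 / \<epsilon>^4 * B\<^sup>2 * exp (10 * lam) * L"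
        proof -
          have "exp ((2 / q + 10) * lam) = (exp (lam / q))\<^sup>2 * exp (10 * lam)"
            by (simp add: power2_eq_square exp_add[symmetric] algebra_simps add_divide_distrib)
          then show ?thesis unfolding B_def using q0 eps by (simp add: power_int_minus field_simps power2_eq_square power4_eq_xxxx)
        qed
        then show ?thesis using T2 by simp
      qed
      show "xs \<in> G" unfolding G_def
      proof (intro CollectI ballI)
        fix i assume i: "i \<in> {1..n-1}"
        have sc: "exp (- 3 * lam) / (2 * (1 + 2 * lam)) * (thb i - A n i)\<^sup>2 \<le> Sf n A thb - Sf n A An"
          unfolding An_def by (rule strong_conv[OF n2 sym lam rows i thb_vs])
        have "real T * (exp (- 3 * lam) / (2 * (1 + 2 * lam))) * (thb i - A n i)\<^sup>2 \<le> real T * (Sf n A thb - Sf n A An)"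
        proof -
          have h: "real T * (exp (- 3 * lam) / (2 * (1 + 2 * lam)) * (thb i - A n i)\<^sup>2) \<le> real T * (Sf n A thb - Sf n A An)"
            by (rule mult_left_mono[OF sc]) (use T0 in simp)
          then show ?thesis by (simp only: mult.assoc)
        qed
        also have "\<dots> \<le> (\<Sum>k<T. Sf n A (th xs k)) - real T * Sf n A An" using jens by (simp add: algebra_simps)
        also have "\<dots> \<le> 15 * lam * B * sqrt (real T * L)" using sumS Qb by linarith
        finally have "(thb i - A n i)\<^sup>2 \<le> \<epsilon>\<^sup>2"
          by (rule final_arith[OF T0 lam B0 L0 eps Tb])
        then have "\<bar>thb i - A n i\<bar>\<^sup>2 \<le> \<epsilon>\<^sup>2" by (simp only: power2_abs)
        then have "\<bar>thb i - A n i\<bar> \<le> \<epsilon>" by (rule power2_le_imp_le) (use eps in simp)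
        then show "\<bar>smg_output n p lam \<eta> T xs i - smg_output n p lam \<eta> T xs (n - 1 + i) - A n i\<bar> \<le> \<epsilon>"
          unfolding thb_eq wb_def .
      qed
    qed

    have "1 - \<delta> \<le> 1 - measure_pmf.prob ?P Bd" using bad by simp
    also have "\<dots> = measure_pmf.prob ?P (UNIV - Bd)"
      using measure_pmf.prob_compl[of Bd ?P] by simp
    also have "\<dots> = measure_pmf.prob ?P ((UNIV - Bd) \<inter> set_pmf ?P)"
      by (simp add: measure_Int_set_pmf)
    also have "\<dots> \<le> measure_pmf.prob ?P G"
      by (rule measure_pmf.finite_measure_mono) (use good in auto)
    finally show "1 - \<delta> \<le> measure_pmf.prob (miss_samples n A p T)
        {xs. \<forall>i\<in>{1..n-1}. \<bar>smg_output n p lam \<eta> T xs i - smg_output n p lam \<eta> T xs (n - 1 + i) - A n i\<bar> \<le> \<epsilon>}"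
      unfolding G_def .

  qed
qed


end
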